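(* Let $H$ be a Hessenberg space of $n\times n$ matrices that is minimal in its $E_{1n}$-equivalence class, and let $H=\sum_{(i,j)\in S}H_{ij}$ be a maximal decomposition. Then the irreducible components of $X_H$ are exactly the Schubert varieties $X_{H_{ij}}$, $(i,j)\in S$.
   Context: $B$ is the group of invertible upper-triangular $n\times n$ complex matrices; $[g]$ denotes the flag whose $k$-dimensional subspace is spanned by the first $k$ columns of $g$. $E_{kl}$ is the matrix unit with $1$ in entry $(k,l)$. A Hessenberg space is a subspace of the form $H_h=\operatorname{span}\{E_{kl}: k\le h(l)\}$ for a nondecreasing function $h:\{1,\dots,n\}\to\{0,1,\dots,n\}$. For $1\le i,j\le n$, $H_{ij}=\operatorname{span}\{E_{kl}: k\le i,\ l\ge j\}$. For a Hessenberg space $K$, $X_K=\{[g]\in GL_n(\mathbb{C})/B: g^{-1}E_{1n}g\in K\}$. Two Hessenberg spaces $K,K'$ are $E_{1n}$-equivalent if $X_K=X_{K'}$; $K$ is minimal in its class if no Hessenberg space properly contained in $K$ is $E_{1n}$-equivalent to it. A maximal decomposition of $H$ is an expression $H=\sum_{(i,j)\in S}H_{ij}$ (sum of subspaces) over a set $S$ of pairs such that no two distinct pairs $(i,j),(i',j')\in S$ satisfy $H_{ij}\subseteq H_{i'j'}$. (For $i\ne j$, $X_{H_{ij}}$ is a Schubert variety, i.e. the closure of a set $\{[bw]:b\in B\}$ for a permutation matrix $w$.) *)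

theory Defs
  imports "Jordan_Normal_Form.Matrix"
begin

text \<open>Matrices are Jordan_Normal_Form matrices of dimension n x n with
  0-based indices; the paper's entry (k,l) (1-based) is entry (k-1,l-1) here.
  Patterns (sets of positions) are given with the paper's 1-based indices.\<close>

definition GL :: "nat \<Rightarrow> complex mat set" where
  "GL n = {g \<in> carrier_mat n n. invertible_mat g}"

definition Borel :: "nat \<Rightarrow> complex mat set" where
  "Borel n = {b \<in> carrier_mat n n. invertible_mat b \<and> upper_triangular b}"

text \<open>The flag [g], represented by the coset gB.\<close>
definition flag :: "nat \<Rightarrow> complex mat \<Rightarrow> complex mat set" where
  "flag n g = {g * b | b. b \<in> Borel n}"

definition flag_variety :: "nat \<Rightarrow> complex mat set set" where
  "flag_variety n = flag n ` GL n"

definition Eunit :: "nat \<Rightarrow> nat \<Rightarrow> nat \<Rightarrow> complex mat" where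
  "Eunit n k l = mat n n (\<lambda>(a, b). if a = k - 1 \<and> b = l - 1 then 1 else 0)"

text \<open>Span of the matrix units E_{kl}, (k,l) in P (1-based positions in {1..n}):
  the matrices supported on P.\<close>
definition unit_span :: "nat \<Rightarrow> (nat \<times> nat) set \<Rightarrow> complex mat set" where
  "unit_span n P = {A \<in> carrier_mat n n. \<forall>a<n. \<forall>b<n. (a + 1, b + 1) \<notin> P \<longrightarrow> A $$ (a, b) = 0}"

definition hess_space :: "nat \<Rightarrow> (nat \<Rightarrow> nat) \<Rightarrow> complex mat set" where
  "hess_space n h = unit_span n {(k, l). k \<in> {1..n} \<and> l \<in> {1..n} \<and> k \<le> h l}"

definition is_hessenberg :: "nat \<Rightarrow> complex mat set \<Rightarrow> bool" where
  "is_hessenberg n K \<longleftrightarrow> (\<exists>h. mono_on {1..n} h \<and> (\<forall>l\<in>{1..n}. h l \<le> n) \<and> K = hess_space n h)"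

definition Hij_pattern :: "nat \<Rightarrow> nat \<Rightarrow> nat \<Rightarrow> (nat \<times> nat) set" where
  "Hij_pattern n i j = {(k, l). k \<in> {1..n} \<and> l \<in> {1..n} \<and> k \<le> i \<and> j \<le> l}"

definition Hij :: "nat \<Rightarrow> nat \<Rightarrow> nat \<Rightarrow> complex mat set" where
  "Hij n i j = unit_span n (Hij_pattern n i j)"

text \<open>The sum of the subspaces H_{ij}, (i,j) in S: the span of the union of the unit sets.\<close>
definition Hsum :: "nat \<Rightarrow> (nat \<times> nat) set \<Rightarrow> complex mat set" where
  "Hsum n S = unit_span n (\<Union>(i, j)\<in>S. Hij_pattern n i j)"

definition XK :: "nat \<Rightarrow> complex mat set \<Rightarrow> complex mat set set" where
  "XK n K = {flag n g | g. g \<in> GL n \<and>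
      (\<exists>ginv \<in> carrier_mat n n. ginv * g = 1\<^sub>m n \<and> g * ginv = 1\<^sub>m n \<and>
          ginv * Eunit n 1 n * g \<in> K)}"

definition E1n_equivalent :: "nat \<Rightarrow> complex mat set \<Rightarrow> complex mat set \<Rightarrow> bool" where
  "E1n_equivalent n K K' \<longleftrightarrow> XK n K = XK n K'"

definition minimal_in_class :: "nat \<Rightarrow> complex mat set \<Rightarrow> bool" where
  "minimal_in_class n K \<longleftrightarrow> is_hessenberg n K \<and>
     (\<forall>K'. is_hessenberg n K' \<and> K' \<subset> K \<longrightarrow> \<not> E1n_equivalent n K' K)"

definition maximal_decomposition :: "nat \<Rightarrow> complex mat set \<Rightarrow> (nat \<times> nat) set \<Rightarrow> bool" where
  "maximal_decomposition n H S \<longleftrightarrow> S \<subseteq> {1..n} \<times> {1..n} \<and> H = Hsum n S \<and>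
     (\<forall>p\<in>S. \<forall>q\<in>S. p \<noteq> q \<longrightarrow> \<not> Hij n (fst p) (snd p) \<subseteq> Hij n (fst q) (snd q))"

inductive_set poly_fun :: "nat \<Rightarrow> (complex mat \<Rightarrow> complex) set" for n where
  const: "(\<lambda>_. c) \<in> poly_fun n"
| coord: "a < n \<Longrightarrow> b < n \<Longrightarrow> (\<lambda>A. A $$ (a, b)) \<in> poly_fun n"
| add: "f \<in> poly_fun n \<Longrightarrow> g \<in> poly_fun n \<Longrightarrow> (\<lambda>A. f A + g A) \<in> poly_fun n"
| mult: "f \<in> poly_fun n \<Longrightarrow> g \<in> poly_fun n \<Longrightarrow> (\<lambda>A. f A * g A) \<in> poly_fun n"

definition zariski_closed_GL :: "nat \<Rightarrow> complex mat set \<Rightarrow> bool" where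
  "zariski_closed_GL n C \<longleftrightarrow> (\<exists>F \<subseteq> poly_fun n. C = {g \<in> GL n. \<forall>f\<in>F. f g = 0})"

text \<open>Closed subsets of the flag variety GL_n/B (quotient Zariski topology):
  sets of flags whose preimage in GL_n is Zariski closed.\<close>
definition flag_closed :: "nat \<Rightarrow> complex mat set set \<Rightarrow> bool" where
  "flag_closed n Z \<longleftrightarrow> Z \<subseteq> flag_variety n \<and> zariski_closed_GL n (\<Union>Z)"

definition flag_irreducible :: "nat \<Rightarrow> complex mat set set \<Rightarrow> bool" where
  "flag_irreducible n Y \<longleftrightarrow> Y \<noteq> {} \<and> Y \<subseteq> flag_variety n \<and>
     (\<forall>Z1 Z2. flag_closed n Z1 \<and> flag_closed n Z2 \<and> Y \<subseteq> Z1 \<union> Z2 \<longrightarrow> Y \<subseteq> Z1 \<or> Y \<subseteq> Z2)"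

definition irreducible_component :: "nat \<Rightarrow> complex mat set set \<Rightarrow> complex mat set set \<Rightarrow> bool" where
  "irreducible_component n X Y \<longleftrightarrow> Y \<subseteq> X \<and> flag_irreducible n Y \<and>
     (\<forall>Y'. Y \<subseteq> Y' \<and> Y' \<subseteq> X \<and> flag_irreducible n Y' \<longrightarrow> Y' = Y)"

end

theory Submission
  imports Defs "Jordan_Normal_Form.Determinant" "HOL-Computational_Algebra.Polynomial"
begin

lemma mult_entry:
  assumes "A \<in> carrier_mat n n" "B \<in> carrier_mat n n" "a < n" "b < n"
  shows "(A * B) $$ (a, b) = (\<Sum>c<n. A $$ (a, c) * B $$ (c, b))"
  using assms by (auto simp: scalar_prod_def atLeast0LessThan intro!: sum.cong)

lemma pf_sum:
  assumes "finite I" "\<And>i. i \<in> I \<Longrightarrow> f i \<in> poly_fun n"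
  shows "(\<lambda>A. \<Sum>i\<in>I. f i A) \<in> poly_fun n"
  using assms
proof (induction I rule: finite_induct)
  case empty
  then show ?case using poly_fun.const[of 0 n] by simp
next
  case (insert x F)
  then show ?case using poly_fun.add[of "f x" n "\<lambda>A. \<Sum>i\<in>F. f i A"] by simp
qed

lemma pf_prod:
  assumes "finite I" "\<And>i. i \<in> I \<Longrightarrow> f i \<in> poly_fun n"
  shows "(\<lambda>A. \<Prod>i\<in>I. f i A) \<in> poly_fun n"
  using assms
proof (induction I rule: finite_induct)
  case empty
  then show ?case using poly_fun.const[of 1 n] by simp
next
  case (insert x F)
  then show ?case using poly_fun.mult[of "f x" n "\<lambda>A. \<Prod>i\<in>F. f i A"] by simp
qed

lemma pf_detlike:
  assumes "\<And>k. k < m \<Longrightarrow> \<rho> k < n" "\<And>k. k < m \<Longrightarrow> \<kappa> k < n"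
  shows "(\<lambda>A. \<Sum>p\<in>{p. p permutes {0..<m}}. signof p * (\<Prod>k=0..<m. A $$ (\<rho> k, \<kappa> (p k)))) \<in> poly_fun n"
proof (rule pf_sum)
  show "finite {p. p permutes {0..<m}}" by (simp add: finite_permutations)
next
  fix p assume p: "p \<in> {p. p permutes {0..<m}}"
  have pk: "k < m \<Longrightarrow> p k < m" for k using p permutes_in_image by fastforce
  have "(\<lambda>A. \<Prod>k=0..<m. A $$ (\<rho> k, \<kappa> (p k))) \<in> poly_fun n"
    by (rule pf_prod, simp, rule poly_fun.coord, insert assms pk, auto)
  then show "(\<lambda>A. signof p * (\<Prod>k=0..<m. A $$ (\<rho> k, \<kappa> (p k)))) \<in> poly_fun n"
    using poly_fun.mult[OF poly_fun.const[of "signof p"]] by blast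
qed

definition detf :: "nat \<Rightarrow> complex mat \<Rightarrow> complex" where
  "detf n A = (\<Sum>p\<in>{p. p permutes {0..<n}}. signof p * (\<Prod>k=0..<n. A $$ (k, p k)))"

lemma detf_pf: "detf n \<in> poly_fun n"
  unfolding detf_def using pf_detlike[of n "\<lambda>k. k" n "\<lambda>k. k"] by simp

lemma detf_det: "A \<in> carrier_mat n n \<Longrightarrow> detf n A = det A"
  unfolding detf_def by (simp add: det_def')

definition adjf :: "nat \<Rightarrow> nat \<Rightarrow> complex mat \<Rightarrow> complex" where
  "adjf n a A = (-1)^a * (\<Sum>p\<in>{p. p permutes {0..<n-1}}. signof p *
      (\<Prod>k=0..<n-1. A $$ (Suc k, if p k < a then p k else Suc (p k))))"

lemma adjf_pf: assumes "a < n" shows "adjf n a \<in> poly_fun n"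
proof -
  have "(\<lambda>A. \<Sum>p\<in>{p. p permutes {0..<n-1}}. signof p *
      (\<Prod>k=0..<n-1. A $$ (Suc k, (\<lambda>l. if l < a then l else Suc l) (p k)))) \<in> poly_fun n"
    by (rule pf_detlike, insert assms, auto)
  then show ?thesis unfolding adjf_def
    using poly_fun.mult[OF poly_fun.const[of "(-1)^a"]] by simp
qed

lemma adjf_adj:
  assumes A: "A \<in> carrier_mat n n" and a: "a < n"
  shows "adjf n a A = adj_mat A $$ (a, 0)"
proof -
  have n0: "0 < n" using a by auto
  have md: "mat_delete A 0 a \<in> carrier_mat (n-1) (n-1)" using mat_delete_carrier[OF A] .
  have "adj_mat A $$ (a, 0) = cofactor A 0 a" using A a n0 by (simp add: adj_mat_def)
  also have "\<dots> = (-1)^a * det (mat_delete A 0 a)" by (simp add: cofactor_def)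
  also have "det (mat_delete A 0 a) = (\<Sum>p\<in>{p. p permutes {0..<n-1}}. signof p *
      (\<Prod>k=0..<n-1. A $$ (Suc k, if p k < a then p k else Suc (p k))))"
    unfolding det_def'[OF md]
  proof (rule sum.cong[OF refl], rule arg_cong[where f="\<lambda>x. _ * x"], rule prod.cong[OF refl])
    fix p k assume p: "p \<in> {p. p permutes {0..<n-1}}" and k: "k \<in> {0..<n-1}"
    have pk: "p k < n - 1" using p k permutes_in_image by fastforce
    show "mat_delete A 0 a $$ (k, p k) = A $$ (Suc k, if p k < a then p k else Suc (p k))"
      using A k pk unfolding mat_delete_def by auto
  qed
  finally show ?thesis unfolding adjf_def by simp
qed

definition ispoly :: "(complex \<Rightarrow> complex) \<Rightarrow> bool" where
  "ispoly f \<longleftrightarrow> (\<exists>p. \<forall>t. f t = poly p t)"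

lemma ispoly_const: "ispoly (\<lambda>t. c)"
  unfolding ispoly_def by (rule exI[of _ "[:c:]"], simp)

lemma ispoly_id: "ispoly (\<lambda>t. t)"
  unfolding ispoly_def by (rule exI[of _ "[:0,1:]"], simp)

lemma ispoly_add: "ispoly f \<Longrightarrow> ispoly g \<Longrightarrow> ispoly (\<lambda>t. f t + g t)"
  unfolding ispoly_def by (metis poly_add)

lemma ispoly_mult: "ispoly f \<Longrightarrow> ispoly g \<Longrightarrow> ispoly (\<lambda>t. f t * g t)"
  unfolding ispoly_def by (metis poly_mult)

lemma ispoly_sum: "finite I \<Longrightarrow> (\<And>i. i \<in> I \<Longrightarrow> ispoly (f i)) \<Longrightarrow> ispoly (\<lambda>t. \<Sum>i\<in>I. f i t)"
proof (induction I rule: finite_induct)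
  case empty then show ?case using ispoly_const[of 0] by simp
next
  case (insert x F) then show ?case using ispoly_add[of "f x" "\<lambda>t. \<Sum>i\<in>F. f i t"] by simp
qed

lemma ispoly_nz_mult:
  assumes "ispoly f" "ispoly g" "f t1 \<noteq> 0" "g t2 \<noteq> 0"
  shows "\<exists>t. f t \<noteq> 0 \<and> g t \<noteq> 0"
proof -
  obtain p where p: "\<And>t. f t = poly p t" using assms(1) unfolding ispoly_def by blast
  obtain q where q: "\<And>t. g t = poly q t" using assms(2) unfolding ispoly_def by blast
  have "p \<noteq> 0" using assms(3) p by auto
  moreover have "q \<noteq> 0" using assms(4) q by auto
  ultimately have "p * q \<noteq> 0" by simp
  then obtain t where "poly (p * q) t \<noteq> 0" using poly_all_0_iff_0 by blast
  then show ?thesis using p q by auto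
qed

definition pcurve :: "nat \<Rightarrow> (complex \<Rightarrow> complex mat) \<Rightarrow> bool" where
  "pcurve n \<gamma> \<longleftrightarrow> (\<forall>t. \<gamma> t \<in> carrier_mat n n) \<and> (\<forall>a<n. \<forall>b<n. ispoly (\<lambda>t. \<gamma> t $$ (a, b)))"

lemma pf_curve:
  assumes "f \<in> poly_fun n" "pcurve n \<gamma>"
  shows "ispoly (\<lambda>t. f (\<gamma> t))"
  using assms(1)
proof (induction rule: poly_fun.induct)
  case (const c) then show ?case by (rule ispoly_const)
next
  case (coord a b) then show ?case using assms(2) unfolding pcurve_def by blast
next
  case (add f g) then show ?case using ispoly_add[OF add.IH] by simp
next
  case (mult f g) then show ?case using ispoly_mult[OF mult.IH] by simp
qed

lemma pcurve_mult:
  assumes "pcurve n \<gamma>1" "pcurve n \<gamma>2"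
  shows "pcurve n (\<lambda>t. \<gamma>1 t * \<gamma>2 t)"
  unfolding pcurve_def
proof (intro conjI allI impI)
  fix t show "\<gamma>1 t * \<gamma>2 t \<in> carrier_mat n n" using assms unfolding pcurve_def by (meson mult_carrier_mat)
next
  fix a b assume ab: "a < n" "b < n"
  have "ispoly (\<lambda>t. \<Sum>c<n. \<gamma>1 t $$ (a, c) * \<gamma>2 t $$ (c, b))"
    by (rule ispoly_sum, simp, rule ispoly_mult, insert assms ab, auto simp: pcurve_def)
  moreover have "\<And>t. (\<gamma>1 t * \<gamma>2 t) $$ (a, b) = (\<Sum>c<n. \<gamma>1 t $$ (a, c) * \<gamma>2 t $$ (c, b))"
    using assms ab unfolding pcurve_def by (intro mult_entry) auto
  ultimately show "ispoly (\<lambda>t. (\<gamma>1 t * \<gamma>2 t) $$ (a, b))" by simp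
qed

lemma pcurve_line:
  assumes "A \<in> carrier_mat n n" "B \<in> carrier_mat n n"
  shows "pcurve n (\<lambda>t. A + t \<cdot>\<^sub>m B)"
  unfolding pcurve_def
proof (intro conjI allI impI)
  fix t show "A + t \<cdot>\<^sub>m B \<in> carrier_mat n n" using assms by auto
next
  fix a b assume ab: "a < n" "b < n"
  have "ispoly (\<lambda>t. A $$ (a, b) + t * B $$ (a, b))"
    by (intro ispoly_add ispoly_mult ispoly_const ispoly_id)
  then show "ispoly (\<lambda>t. (A + t \<cdot>\<^sub>m B) $$ (a, b))" using assms ab by simp
qed

lemma det_curve: assumes "pcurve n \<gamma>" shows "ispoly (\<lambda>t. det (\<gamma> t))"
proof -
  have "ispoly (\<lambda>t. detf n (\<gamma> t))" by (rule pf_curve[OF detf_pf assms])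
  moreover have "\<And>t. detf n (\<gamma> t) = det (\<gamma> t)"
    using assms detf_det unfolding pcurve_def by blast
  ultimately show ?thesis by simp
qed

definition IR :: "nat \<Rightarrow> complex mat set \<Rightarrow> bool" where
  "IR n P \<longleftrightarrow> (\<forall>f1\<in>poly_fun n. \<forall>f2\<in>poly_fun n. (\<exists>a\<in>P. f1 a \<noteq> 0) \<longrightarrow> (\<exists>b\<in>P. f2 b \<noteq> 0)
      \<longrightarrow> (\<exists>c\<in>P. f1 c \<noteq> 0 \<and> f2 c \<noteq> 0))"

definition CC :: "nat \<Rightarrow> complex mat set \<Rightarrow> bool" where
  "CC n T \<longleftrightarrow> (\<forall>a\<in>T. \<forall>b\<in>T. \<exists>\<gamma> q. pcurve n \<gamma> \<and> ispoly q \<and> \<gamma> 0 = a \<and> \<gamma> 1 = b \<and>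
      (\<exists>t. q t \<noteq> 0) \<and> (\<forall>t. q t \<noteq> 0 \<longrightarrow> \<gamma> t \<in> T))"

lemma CC_IR: assumes "CC n T" shows "IR n T"
  unfolding IR_def
proof (intro ballI impI)
  fix f1 f2 assume f1: "f1 \<in> poly_fun n" and f2: "f2 \<in> poly_fun n"
  assume "\<exists>a\<in>T. f1 a \<noteq> 0" "\<exists>b\<in>T. f2 b \<noteq> 0"
  then obtain a b where a: "a \<in> T" "f1 a \<noteq> 0" and b: "b \<in> T" "f2 b \<noteq> 0" by blast
  have "\<exists>\<gamma> q. pcurve n \<gamma> \<and> ispoly q \<and> \<gamma> 0 = a \<and> \<gamma> 1 = b \<and>
      (\<exists>t. q t \<noteq> 0) \<and> (\<forall>t. q t \<noteq> 0 \<longrightarrow> \<gamma> t \<in> T)" using bspec[OF bspec[OF assms[unfolded CC_def] a(1)] b(1)] .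
  then obtain \<gamma> q where g: "pcurve n \<gamma>" "ispoly q" "\<gamma> 0 = a" "\<gamma> 1 = b" "\<exists>t. q t \<noteq> 0"
     "\<forall>t. q t \<noteq> 0 \<longrightarrow> \<gamma> t \<in> T" by blast
  have p1: "ispoly (\<lambda>t. f1 (\<gamma> t))" by (rule pf_curve[OF f1 g(1)])
  have p2: "ispoly (\<lambda>t. f2 (\<gamma> t))" by (rule pf_curve[OF f2 g(1)])
  obtain t0 where t0: "q t0 \<noteq> 0" using g(5) by blast
  have "f1 (\<gamma> 0) \<noteq> 0" using a g(3) by simp
  from ispoly_nz_mult[OF p1 g(2) this t0]
  obtain t1 where t1: "f1 (\<gamma> t1) \<noteq> 0" "q t1 \<noteq> 0" by blast
  have "f1 (\<gamma> t1) * q t1 \<noteq> 0" using t1 by simp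
  moreover have "f2 (\<gamma> 1) \<noteq> 0" using b g(4) by simp
  ultimately obtain t where t: "f1 (\<gamma> t) * q t \<noteq> 0" "f2 (\<gamma> t) \<noteq> 0"
    using ispoly_nz_mult[OF ispoly_mult[OF p1 g(2)] p2] by blast
  then have "\<gamma> t \<in> T" "f1 (\<gamma> t) \<noteq> 0" using g(6) by simp_all
  then show "\<exists>c\<in>T. f1 c \<noteq> 0 \<and> f2 c \<noteq> 0" using t(2) by blast
qed

lemma dense_IR:
  assumes TP: "T \<subseteq> P" and IT: "IR n T"
    and cv: "\<And>a. a \<in> P \<Longrightarrow> \<exists>\<gamma> q. pcurve n \<gamma> \<and> ispoly q \<and> \<gamma> 0 = a \<and>
      (\<exists>t. q t \<noteq> 0) \<and> (\<forall>t. q t \<noteq> 0 \<longrightarrow> \<gamma> t \<in> T)"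
  shows "IR n P"
proof -
  have move: "\<exists>b\<in>T. f b \<noteq> 0" if f: "f \<in> poly_fun n" and a: "a \<in> P" "f a \<noteq> 0" for f a
  proof -
    obtain \<gamma> q where g: "pcurve n \<gamma>" "ispoly q" "\<gamma> 0 = a" "\<exists>t. q t \<noteq> 0"
      "\<forall>t. q t \<noteq> 0 \<longrightarrow> \<gamma> t \<in> T" using cv[OF a(1)] by blast
    obtain t0 where t0: "q t0 \<noteq> 0" using g(4) by blast
    have "f (\<gamma> 0) \<noteq> 0" using a g(3) by simp
    from ispoly_nz_mult[OF pf_curve[OF f g(1)] g(2) this t0]
    obtain t where "f (\<gamma> t) \<noteq> 0" "q t \<noteq> 0" by blast
    then show ?thesis using g(5) by blast
  qed
  show ?thesis unfolding IR_def
  proof (intro ballI impI)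
    fix f1 f2 assume f1: "f1 \<in> poly_fun n" and f2: "f2 \<in> poly_fun n"
      and "\<exists>a\<in>P. f1 a \<noteq> 0" "\<exists>b\<in>P. f2 b \<noteq> 0"
    then obtain a b where a: "a \<in> P" "f1 a \<noteq> 0" and b: "b \<in> P" "f2 b \<noteq> 0" by blast
    have "\<exists>a\<in>T. f1 a \<noteq> 0" using move[OF f1 a] .
    moreover have "\<exists>b\<in>T. f2 b \<noteq> 0" using move[OF f2 b] .
    ultimately obtain c where "c \<in> T" "f1 c \<noteq> 0" "f2 c \<noteq> 0"
      using IT[unfolded IR_def, rule_format, OF f1 f2] by blast
    then show "\<exists>c\<in>P. f1 c \<noteq> 0 \<and> f2 c \<noteq> 0" using TP by blast
  qed
qed

lemma GL_inv: assumes "g \<in> GL n"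
  shows "\<exists>ginv\<in>carrier_mat n n. ginv * g = 1\<^sub>m n \<and> g * ginv = 1\<^sub>m n"
proof -
  have g: "g \<in> carrier_mat n n" "invertible_mat g" using assms unfolding GL_def by auto
  then obtain B where B: "g * B = 1\<^sub>m n" "B * g = 1\<^sub>m (dim_row B)"
    unfolding invertible_mat_def inverts_mat_def by auto
  have "dim_col B = n" using B(1) g(1) by (metis index_mult_mat(3) index_one_mat(3))
  moreover have "dim_row B = n" using B(2) g(1) by (metis carrier_matD(2) index_mult_mat(3) index_one_mat(3))
  ultimately have "B \<in> carrier_mat n n" by auto
  then show ?thesis using B \<open>dim_row B = n\<close> by auto
qed

lemma GL_I: assumes "g \<in> carrier_mat n n" "ginv \<in> carrier_mat n n" "ginv * g = 1\<^sub>m n" "g * ginv = 1\<^sub>m n"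
  shows "g \<in> GL n"
  using assms unfolding GL_def invertible_mat_def inverts_mat_def square_mat.simps by auto

lemma GL_carrier: "g \<in> GL n \<Longrightarrow> g \<in> carrier_mat n n" unfolding GL_def by auto

lemma inv_unique:
  fixes g a b :: "complex mat"
  assumes "g \<in> carrier_mat n n" "a \<in> carrier_mat n n" "b \<in> carrier_mat n n"
    "a * g = 1\<^sub>m n" "g * b = 1\<^sub>m n"
  shows "a = b"
proof -
  have "a = a * (g * b)" using right_mult_one_mat[OF assms(2)] assms(5) by simp
  also have "\<dots> = (a * g) * b" by (rule assoc_mult_mat[OF assms(2,1,3), symmetric])
  also have "\<dots> = b" using assms(3,4) by simp
  finally show ?thesis .
qed

lemma GL_det: assumes "g \<in> GL n" shows "det g \<noteq> 0"
proof -
  obtain ginv where gi: "ginv \<in> carrier_mat n n" "ginv * g = 1\<^sub>m n" using GL_inv[OF assms] by blast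
  have "det ginv * det g = 1" using det_mult[OF gi(1) GL_carrier[OF assms]] gi(2) by simp
  then show ?thesis by auto
qed

lemma det_GL: assumes g: "g \<in> carrier_mat n n" and d: "det g \<noteq> 0" shows "g \<in> GL n"
proof -
  let ?gi = "(1 / det g) \<cdot>\<^sub>m adj_mat g"
  have a: "adj_mat g \<in> carrier_mat n n" "g * adj_mat g = det g \<cdot>\<^sub>m 1\<^sub>m n" "adj_mat g * g = det g \<cdot>\<^sub>m 1\<^sub>m n"
    using adj_mat[OF g] by auto
  have e: "(1 / det g) \<cdot>\<^sub>m (det g \<cdot>\<^sub>m 1\<^sub>m n) = 1\<^sub>m n"
    by (rule eq_matI, insert d, auto)
  have "g * ?gi = 1\<^sub>m n" using a g d e by (simp add: mult_smult_distrib[of g n n])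
  moreover have "?gi * g = 1\<^sub>m n" using a g d e by (simp add: mult_smult_assoc_mat[of _ n n])
  ultimately show ?thesis using GL_I[OF g, of ?gi] a(1) by auto
qed

lemma GL_mult: assumes "a \<in> GL n" "b \<in> GL n" shows "a * b \<in> GL n"
proof -
  have "det (a * b) = det a * det b" using det_mult GL_carrier assms by blast
  then show ?thesis using GL_det[OF assms(1)] GL_det[OF assms(2)] det_GL[of "a*b" n]
    GL_carrier[OF assms(1)] GL_carrier[OF assms(2)] by auto
qed

lemma inv_cut:
  fixes r C :: "complex mat"
  assumes r: "r \<in> carrier_mat n n" and C: "C \<in> carrier_mat n n" and rC: "r * C = 1\<^sub>m n"
    and Cr: "C * r = 1\<^sub>m n"
    and z: "\<And>k l. m \<le> k \<Longrightarrow> k < n \<Longrightarrow> l < m \<Longrightarrow> r $$ (k, l) = 0"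
    and k: "m \<le> k" "k < n" and l: "l < m"
  shows "C $$ (k, l) = 0"
proof -
  have mn: "m \<le> n" using k by auto
  define A1 where "A1 = mat m m (\<lambda>(a,b). r $$ (a,b))"
  define A2 where "A2 = mat m (n-m) (\<lambda>(a,b). r $$ (a,b+m))"
  define A4 where "A4 = mat (n-m) (n-m) (\<lambda>(a,b). r $$ (a+m,b+m))"
  have fb: "four_block_mat A1 A2 (0\<^sub>m (n-m) m) A4 = r"
  proof (rule eq_matI)
    fix a b assume ab: "a < dim_row r" "b < dim_col r"
    then show "four_block_mat A1 A2 (0\<^sub>m (n-m) m) A4 $$ (a, b) = r $$ (a, b)"
      using r mn z[of a b] unfolding A1_def A2_def A4_def by auto
  qed (insert r mn, auto simp: A1_def A4_def)
  have "det r = det A1 * det A4"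
    unfolding fb[symmetric] by (rule det_four_block_mat_lower_left_zero, auto simp: A1_def A2_def A4_def)
  moreover have "det r \<noteq> 0" using GL_det[OF GL_I[OF r C Cr rC]] .
  ultimately have d4: "det A4 \<noteq> 0" by auto
  have A4c: "A4 \<in> carrier_mat (n-m) (n-m)" unfolding A4_def by auto
  define y where "y = vec (n-m) (\<lambda>a. C $$ (a+m, l))"
  have yc: "y \<in> carrier_vec (n-m)" unfolding y_def by auto
  have "A4 *\<^sub>v y = 0\<^sub>v (n-m)"
  proof (rule eq_vecI)
    fix a assume a: "a < dim_vec (0\<^sub>v (n-m) :: complex vec)"
    then have a': "a < n - m" by simp
    let ?f = "\<lambda>c. r $$ (a+m, c) * C $$ (c, l)"
    have "(A4 *\<^sub>v y) $ a = (\<Sum>c\<in>{0..<n-m}. r $$ (a+m, c+m) * C $$ (c+m, l))"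
      using a' unfolding A4_def y_def by (auto simp: scalar_prod_def)
    also have "\<dots> = sum ?f {0+m..<(n-m)+m}"
      by (rule sum.shift_bounds_nat_ivl[symmetric])
    also have "\<dots> = sum ?f {m..<n}" using mn by simp
    also have "\<dots> = sum ?f {0..<m} + sum ?f {m..<n}"
      using z a' by (auto intro!: sum.neutral)
    also have "\<dots> = sum ?f {0..<n}" using sum.atLeastLessThan_concat[of 0 m n ?f] mn by simp
    also have "\<dots> = (r * C) $$ (a+m, l)"
      using r C a' l mn by (auto simp: scalar_prod_def)
    also have "\<dots> = 0" using rC a' l by simp
    finally show "(A4 *\<^sub>v y) $ a = 0\<^sub>v (n-m) $ a" using a' by simp
  qed (simp add: A4_def)
  then have "y = 0\<^sub>v (n-m)" using det_0_iff_vec_prod_zero[OF A4c] d4 yc by blast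
  then have "y $ (k - m) = 0" using k by simp
  moreover have "k - m + m = k" using k by simp
  ultimately show ?thesis using k unfolding y_def by simp
qed

lemma ut_mult:
  fixes A B :: "complex mat"
  assumes "A \<in> carrier_mat n n" "B \<in> carrier_mat n n" "upper_triangular A" "upper_triangular B"
  shows "upper_triangular (A * B)"
proof (rule upper_triangularI)
  fix i j assume ij: "j < i" "i < dim_row (A * B)"
  then have i: "i < n" using assms by simp
  have "(A * B) $$ (i, j) = (\<Sum>c<n. A $$ (i, c) * B $$ (c, j))"
    using mult_entry[OF assms(1,2) i] ij i by simp
  also have "\<dots> = 0"
  proof (rule sum.neutral, intro ballI)
    fix c assume c: "c \<in> {..<n}"
    show "A $$ (i, c) * B $$ (c, j) = 0"
    proof (cases "c < i")
      case True then have "A $$ (i, c) = 0" using upper_triangularD[OF assms(3) True] assms(1) i by simp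
      then show ?thesis by simp
    next
      case False then have "j < c" using ij by auto
      then have "B $$ (c, j) = 0" using upper_triangularD[OF assms(4)] assms(2) c by simp
      then show ?thesis by simp
    qed
  qed
  finally show "(A * B) $$ (i, j) = 0" .
qed

lemma Borel_carrier: "b \<in> Borel n \<Longrightarrow> b \<in> carrier_mat n n" unfolding Borel_def by auto
lemma Borel_GL: "b \<in> Borel n \<Longrightarrow> b \<in> GL n" unfolding Borel_def GL_def by auto
lemma Borel_ut: "b \<in> Borel n \<Longrightarrow> k < n \<Longrightarrow> l < k \<Longrightarrow> b $$ (k, l) = 0"
  unfolding Borel_def by auto

lemma Borel_one: "1\<^sub>m n \<in> Borel n"
  unfolding Borel_def using GL_I[of "1\<^sub>m n" n "1\<^sub>m n"] unfolding GL_def by auto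

lemma Borel_mult: assumes "a \<in> Borel n" "b \<in> Borel n" shows "a * b \<in> Borel n"
proof -
  have "a * b \<in> GL n" using GL_mult Borel_GL assms by blast
  moreover have "upper_triangular (a * b)"
    using ut_mult[OF Borel_carrier[OF assms(1)] Borel_carrier[OF assms(2)]] assms unfolding Borel_def by auto
  ultimately show ?thesis unfolding Borel_def GL_def by auto
qed

lemma Borel_inv: assumes b: "b \<in> Borel n"
  shows "\<exists>bi\<in>Borel n. bi * b = 1\<^sub>m n \<and> b * bi = 1\<^sub>m n"
proof -
  obtain bi where bi: "bi \<in> carrier_mat n n" "bi * b = 1\<^sub>m n" "b * bi = 1\<^sub>m n"
    using GL_inv[OF Borel_GL[OF b]] by blast
  have "upper_triangular bi"
  proof (rule upper_triangularI)
    fix k l assume kl: "l < k" "k < dim_row bi"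
    show "bi $$ (k, l) = 0"
      by (rule inv_cut[OF Borel_carrier[OF b] bi(1) bi(3) bi(2), of k], insert kl bi(1) b Borel_ut, auto)
  qed
  moreover have "bi \<in> GL n" using GL_I[OF bi(1) Borel_carrier[OF b] bi(3) bi(2)] .
  ultimately show ?thesis using bi unfolding Borel_def GL_def by auto
qed

lemma flag_self: "g \<in> carrier_mat n n \<Longrightarrow> g \<in> flag n g"
  unfolding flag_def using Borel_one[of n] by (intro CollectI exI[of _ "1\<^sub>m n"]) auto

lemma flag_eq: assumes g': "g' \<in> carrier_mat n n" and g: "g \<in> flag n g'"
  shows "flag n g = flag n g'"
proof -
  obtain b where b: "b \<in> Borel n" "g = g' * b" using g unfolding flag_def by auto
  obtain bi where bi: "bi \<in> Borel n" "bi * b = 1\<^sub>m n" "b * bi = 1\<^sub>m n" using Borel_inv[OF b(1)] by blast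
  have bc: "b \<in> carrier_mat n n" "bi \<in> carrier_mat n n" using b bi Borel_carrier by auto
  show ?thesis
  proof
    show "flag n g \<subseteq> flag n g'"
    proof
      fix x assume "x \<in> flag n g"
      then obtain c where c: "c \<in> Borel n" "x = g * c" unfolding flag_def by auto
      have "x = g' * (b * c)" using c(2) b(2) assoc_mult_mat[OF g' bc(1) Borel_carrier[OF c(1)]] by simp
      then show "x \<in> flag n g'" unfolding flag_def using Borel_mult[OF b(1) c(1)] by auto
    qed
  next
    show "flag n g' \<subseteq> flag n g"
    proof
      fix x assume "x \<in> flag n g'"
      then obtain c where c: "c \<in> Borel n" "x = g' * c" unfolding flag_def by auto
      have cc: "c \<in> carrier_mat n n" using Borel_carrier[OF c(1)] .
      have "g * (bi * c) = (g' * b) * (bi * c)" using b(2) by simp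
      also have "\<dots> = g' * (b * (bi * c))" by (rule assoc_mult_mat[OF g' bc(1) mult_carrier_mat[OF bc(2) cc]])
      also have "b * (bi * c) = (b * bi) * c" by (rule assoc_mult_mat[OF bc(1) bc(2) cc, symmetric])
      also have "\<dots> = c" using bi(3) cc by simp
      finally have "g * (bi * c) = x" using c(2) by simp
      then show "x \<in> flag n g" unfolding flag_def using Borel_mult[OF bi(1) c(1)] by force
    qed
  qed
qed

lemma Eunit_entry: "a < n \<Longrightarrow> b < n \<Longrightarrow> Eunit n k l $$ (a, b) = (if a = k - 1 \<and> b = l - 1 then 1 else 0)"
  unfolding Eunit_def by simp

lemma E_entry:
  fixes g ginv :: "complex mat"
  assumes g: "g \<in> carrier_mat n n" and gi: "ginv \<in> carrier_mat n n" and ab: "a < n" "b < n"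
  shows "(ginv * Eunit n 1 n * g) $$ (a, b) = ginv $$ (a, 0) * g $$ (n - 1, b)"
proof -
  define E where "E = Eunit n 1 n"
  have E: "E \<in> carrier_mat n n" unfolding E_def Eunit_def by simp
  have Ee: "x < n \<Longrightarrow> y < n \<Longrightarrow> E $$ (x, y) = (if x = 0 \<and> y = n - 1 then 1 else 0)" for x y
    unfolding E_def by (simp add: Eunit_entry)
  have e1: "(ginv * E) $$ (a, c) = (if c = n - 1 then ginv $$ (a, 0) else 0)" if c: "c < n" for c
  proof -
    have "(ginv * E) $$ (a, c) = (\<Sum>d<n. ginv $$ (a, d) * E $$ (d, c))"
      by (rule mult_entry[OF gi E ab(1) c])
    also have "\<dots> = (\<Sum>d<n. if d = 0 then (if c = n - 1 then ginv $$ (a, 0) else 0) else 0)"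
      using c by (intro sum.cong refl) (auto simp: Ee)
    also have "\<dots> = (if c = n - 1 then ginv $$ (a, 0) else 0)" using ab by simp
    finally show ?thesis .
  qed
  have "(ginv * E * g) $$ (a, b) = (\<Sum>c<n. (ginv * E) $$ (a, c) * g $$ (c, b))"
    by (rule mult_entry[OF mult_carrier_mat[OF gi E] g ab])
  also have "\<dots> = (\<Sum>c<n. if c = n - 1 then ginv $$ (a, 0) * g $$ (n - 1, b) else 0)"
    by (intro sum.cong refl) (auto simp: e1)
  also have "\<dots> = ginv $$ (a, 0) * g $$ (n - 1, b)" using ab by simp
  finally show ?thesis unfolding E_def .
qed

definition condij :: "nat \<Rightarrow> nat \<Rightarrow> nat \<Rightarrow> complex mat \<Rightarrow> complex mat \<Rightarrow> bool" where
  "condij n i j g ginv \<longleftrightarrow> (\<forall>a. i \<le> a \<and> a < n \<longrightarrow> ginv $$ (a, 0) = 0) \<and> (\<forall>b. b + 1 < j \<and> b < n \<longrightarrow> g $$ (n - 1, b) = 0)"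

definition PPc :: "nat \<Rightarrow> nat \<Rightarrow> nat \<Rightarrow> complex mat set" where
  "PPc n i j = {g \<in> GL n. \<exists>ginv\<in>carrier_mat n n. ginv * g = 1\<^sub>m n \<and> g * ginv = 1\<^sub>m n \<and> condij n i j g ginv}"

lemma row_last_nz:
  fixes g ginv :: "complex mat"
  assumes g: "g \<in> carrier_mat n n" and gi: "ginv \<in> carrier_mat n n" and e: "g * ginv = 1\<^sub>m n" and n: "1 \<le> n"
  shows "\<exists>b<n. g $$ (n - 1, b) \<noteq> 0"
proof (rule ccontr)
  assume "\<not> ?thesis"
  then have "(\<Sum>c<n. g $$ (n - 1, c) * ginv $$ (c, n - 1)) = 0" by simp
  moreover have "(g * ginv) $$ (n - 1, n - 1) = (\<Sum>c<n. g $$ (n - 1, c) * ginv $$ (c, n - 1))"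
    using mult_entry[OF g gi] n by simp
  moreover have "(g * ginv) $$ (n - 1, n - 1) = 1" using e n by simp
  ultimately show False by simp
qed

lemma col_first_nz:
  fixes g ginv :: "complex mat"
  assumes g: "g \<in> carrier_mat n n" and gi: "ginv \<in> carrier_mat n n" and e: "g * ginv = 1\<^sub>m n" and n: "1 \<le> n"
  shows "\<exists>a<n. ginv $$ (a, 0) \<noteq> 0"
proof (rule ccontr)
  assume "\<not> ?thesis"
  then have "(\<Sum>c<n. g $$ (0, c) * ginv $$ (c, 0)) = 0" by simp
  moreover have "(g * ginv) $$ (0, 0) = (\<Sum>c<n. g $$ (0, c) * ginv $$ (c, 0))"
    using mult_entry[OF g gi] n by simp
  moreover have "(g * ginv) $$ (0, 0) = 1" using e n by simp
  ultimately show False by simp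
qed

lemma Hij_cond:
  assumes n: "1 \<le> n" and g: "g \<in> carrier_mat n n" and gi: "ginv \<in> carrier_mat n n"
    and e: "g * ginv = 1\<^sub>m n"
  shows "ginv * Eunit n 1 n * g \<in> Hij n i j \<longleftrightarrow> condij n i j g ginv"
proof -
  have M: "ginv * Eunit n 1 n * g \<in> carrier_mat n n" using g gi unfolding Eunit_def by auto
  have "ginv * Eunit n 1 n * g \<in> Hij n i j \<longleftrightarrow>
     (\<forall>a<n. \<forall>b<n. \<not> (a + 1 \<le> i \<and> j \<le> b + 1) \<longrightarrow> ginv $$ (a, 0) * g $$ (n - 1, b) = 0)"
    using M E_entry[OF g gi] unfolding Hij_def unit_span_def Hij_pattern_def by auto
  also have "\<dots> \<longleftrightarrow> condij n i j g ginv"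
  proof
    assume h: "\<forall>a<n. \<forall>b<n. \<not> (a + 1 \<le> i \<and> j \<le> b + 1) \<longrightarrow> ginv $$ (a, 0) * g $$ (n - 1, b) = 0"
    obtain b0 where b0: "b0 < n" "g $$ (n - 1, b0) \<noteq> 0" using row_last_nz[OF g gi e n] by blast
    obtain a0 where a0: "a0 < n" "ginv $$ (a0, 0) \<noteq> 0" using col_first_nz[OF g gi e n] by blast
    show "condij n i j g ginv" unfolding condij_def
    proof (intro conjI allI impI)
      fix a assume a: "i \<le> a \<and> a < n"
      then have "ginv $$ (a, 0) * g $$ (n - 1, b0) = 0" using h b0(1) by simp
      then show "ginv $$ (a, 0) = 0" using b0(2) by simp
    next
      fix b assume b: "b + 1 < j \<and> b < n"
      then have "ginv $$ (a0, 0) * g $$ (n - 1, b) = 0" using h a0(1) by simp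
      then show "g $$ (n - 1, b) = 0" using a0(2) by simp
    qed
  next
    assume "condij n i j g ginv"
    then show "\<forall>a<n. \<forall>b<n. \<not> (a + 1 \<le> i \<and> j \<le> b + 1) \<longrightarrow> ginv $$ (a, 0) * g $$ (n - 1, b) = 0"
      unfolding condij_def by auto
  qed
  finally show ?thesis .
qed

lemma PPc_cond:
  assumes g: "g \<in> PPc n i j" and gi: "ginv \<in> carrier_mat n n" "ginv * g = 1\<^sub>m n"
  shows "condij n i j g ginv"
proof -
  obtain gi' where gi': "gi' \<in> carrier_mat n n" "gi' * g = 1\<^sub>m n" "g * gi' = 1\<^sub>m n" "condij n i j g gi'"
    using g unfolding PPc_def by blast
  have "ginv = gi'" using inv_unique[OF GL_carrier gi(1) gi'(1) gi(2) gi'(3)] g unfolding PPc_def by blast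
  then show ?thesis using gi' by simp
qed

lemma PPc_GL: "g \<in> PPc n i j \<Longrightarrow> g \<in> GL n" unfolding PPc_def by auto

lemma PPc_I: assumes "g \<in> carrier_mat n n" "ginv \<in> carrier_mat n n" "ginv * g = 1\<^sub>m n" "g * ginv = 1\<^sub>m n"
   "condij n i j g ginv" shows "g \<in> PPc n i j"
  unfolding PPc_def using GL_I[OF assms(1-4)] assms by blast

lemma PPc_Borel:
  assumes g: "g \<in> PPc n i j" and b: "b \<in> Borel n"
  shows "g * b \<in> PPc n i j"
proof -
  obtain ginv where gi: "ginv \<in> carrier_mat n n" "ginv * g = 1\<^sub>m n" "g * ginv = 1\<^sub>m n" "condij n i j g ginv"
    using g unfolding PPc_def by blast
  obtain bi where bi: "bi \<in> Borel n" "bi * b = 1\<^sub>m n" "b * bi = 1\<^sub>m n" using Borel_inv[OF b] by blast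
  have gc: "g \<in> carrier_mat n n" using g PPc_GL GL_carrier by blast
  have bc: "b \<in> carrier_mat n n" "bi \<in> carrier_mat n n" using b bi Borel_carrier by auto
  have e1: "(bi * ginv) * (g * b) = 1\<^sub>m n"
  proof -
    have "(bi * ginv) * (g * b) = bi * (ginv * (g * b))"
      by (rule assoc_mult_mat[OF bc(2) gi(1) mult_carrier_mat[OF gc bc(1)]])
    also have "ginv * (g * b) = (ginv * g) * b" by (rule assoc_mult_mat[OF gi(1) gc bc(1), symmetric])
    finally show ?thesis using gi bi bc by simp
  qed
  have e2: "(g * b) * (bi * ginv) = 1\<^sub>m n"
  proof -
    have "(g * b) * (bi * ginv) = g * (b * (bi * ginv))"
      by (rule assoc_mult_mat[OF gc bc(1) mult_carrier_mat[OF bc(2) gi(1)]])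
    also have "b * (bi * ginv) = (b * bi) * ginv" by (rule assoc_mult_mat[OF bc(1) bc(2) gi(1), symmetric])
    finally show ?thesis using gi bi bc by simp
  qed
  have c: "condij n i j (g * b) (bi * ginv)" unfolding condij_def
  proof (intro conjI allI impI)
    fix a assume a: "i \<le> a \<and> a < n"
    have "(bi * ginv) $$ (a, 0) = (\<Sum>c<n. bi $$ (a, c) * ginv $$ (c, 0))"
      using mult_entry[OF bc(2) gi(1)] a by simp
    also have "\<dots> = 0"
    proof (rule sum.neutral, intro ballI)
      fix c assume c: "c \<in> {..<n}"
      show "bi $$ (a, c) * ginv $$ (c, 0) = 0"
      proof (cases "c < a")
        case True then show ?thesis using Borel_ut[OF bi(1)] a by simp
      next
        case False then show ?thesis using gi(4) a c unfolding condij_def by simp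
      qed
    qed
    finally show "(bi * ginv) $$ (a, 0) = 0" .
  next
    fix l assume l: "l + 1 < j \<and> l < n"
    have n: "n - 1 < n" using l by simp
    have "(g * b) $$ (n - 1, l) = (\<Sum>c<n. g $$ (n - 1, c) * b $$ (c, l))"
      using mult_entry[OF gc bc(1) n] l by simp
    also have "\<dots> = 0"
    proof (rule sum.neutral, intro ballI)
      fix c assume c: "c \<in> {..<n}"
      show "g $$ (n - 1, c) * b $$ (c, l) = 0"
      proof (cases "l < c")
        case True then show ?thesis using Borel_ut[OF b] c by simp
      next
        case False then show ?thesis using gi(4) l c unfolding condij_def by simp
      qed
    qed
    finally show "(g * b) $$ (n - 1, l) = 0" .
  qed
  show ?thesis by (rule PPc_I[OF _ _ e1 e2 c], insert gc bc gi, auto)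
qed

lemma XK_Hij: assumes n: "1 \<le> n" shows "XK n (Hij n i j) = flag n ` PPc n i j"
proof -
  have eq: "(g \<in> GL n \<and> (\<exists>ginv\<in>carrier_mat n n. ginv * g = 1\<^sub>m n \<and> g * ginv = 1\<^sub>m n \<and>
          ginv * Eunit n 1 n * g \<in> Hij n i j)) \<longleftrightarrow> g \<in> PPc n i j" for g
  proof
    assume h: "g \<in> GL n \<and> (\<exists>ginv\<in>carrier_mat n n. ginv * g = 1\<^sub>m n \<and> g * ginv = 1\<^sub>m n \<and>
          ginv * Eunit n 1 n * g \<in> Hij n i j)"
    then obtain ginv where gi: "ginv \<in> carrier_mat n n" "ginv * g = 1\<^sub>m n" "g * ginv = 1\<^sub>m n"
      "ginv * Eunit n 1 n * g \<in> Hij n i j" by blast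
    have gc: "g \<in> carrier_mat n n" using h GL_carrier by blast
    have "condij n i j g ginv" using Hij_cond[OF n gc gi(1) gi(3)] gi(4) by simp
    then show "g \<in> PPc n i j" using PPc_I[OF gc gi(1-3)] by simp
  next
    assume g: "g \<in> PPc n i j"
    then obtain ginv where gi: "ginv \<in> carrier_mat n n" "ginv * g = 1\<^sub>m n" "g * ginv = 1\<^sub>m n"
      "condij n i j g ginv" unfolding PPc_def by blast
    have gG: "g \<in> GL n" using g PPc_GL by blast
    have gc: "g \<in> carrier_mat n n" using gG GL_carrier by blast
    have "ginv * Eunit n 1 n * g \<in> Hij n i j" using Hij_cond[OF n gc gi(1) gi(3)] gi(4) by simp
    then show "g \<in> GL n \<and> (\<exists>ginv\<in>carrier_mat n n. ginv * g = 1\<^sub>m n \<and> g * ginv = 1\<^sub>m n \<and>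
          ginv * Eunit n 1 n * g \<in> Hij n i j)" using gG gi by blast
  qed
  show ?thesis unfolding XK_def image_def by (simp only: eq) blast
qed

lemma XK_flagvar: "XK n K \<subseteq> flag_variety n"
  unfolding XK_def flag_variety_def by blast

lemma flag_XK:
  assumes n: "1 \<le> n" and g: "g \<in> GL n" and f: "flag n g \<in> XK n (Hij n i j)"
  shows "g \<in> PPc n i j"
proof -
  obtain g' where g': "g' \<in> PPc n i j" "flag n g = flag n g'" using f XK_Hij[OF n] by auto
  have "g \<in> flag n g'" using flag_self[OF GL_carrier[OF g]] g'(2) by simp
  then obtain b where "b \<in> Borel n" "g = g' * b" unfolding flag_def by auto
  then show ?thesis using PPc_Borel g'(1) by simp
qed

lemma Union_XK: assumes n: "1 \<le> n" shows "\<Union> (XK n (Hij n i j)) = PPc n i j"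
proof
  show "\<Union> (XK n (Hij n i j)) \<subseteq> PPc n i j"
  proof
    fix x assume "x \<in> \<Union> (XK n (Hij n i j))"
    then obtain g where g: "g \<in> PPc n i j" "x \<in> flag n g" using XK_Hij[OF n] by auto
    then obtain b where "b \<in> Borel n" "x = g * b" unfolding flag_def by auto
    then show "x \<in> PPc n i j" using PPc_Borel g by simp
  qed
next
  show "PPc n i j \<subseteq> \<Union> (XK n (Hij n i j))"
  proof
    fix g assume g: "g \<in> PPc n i j"
    then have "g \<in> flag n g" using flag_self PPc_GL GL_carrier by blast
    moreover have "flag n g \<in> XK n (Hij n i j)" using XK_Hij[OF n] g by simp
    ultimately show "g \<in> \<Union> (XK n (Hij n i j))" by blast
  qed
qed

lemma flag_closed_XK: assumes n: "1 \<le> n" shows "flag_closed n (XK n (Hij n i j))"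
  unfolding flag_closed_def
proof (intro conjI XK_flagvar)
  define F where "F = (\<lambda>a. adjf n a) ` {a. i \<le> a \<and> a < n} \<union> (\<lambda>b. (\<lambda>A. A $$ (n - 1, b))) ` {b. b + 1 < j \<and> b < n}"
  have F: "F \<subseteq> poly_fun n" unfolding F_def using adjf_pf poly_fun.coord n by auto
  have "PPc n i j = {g \<in> GL n. \<forall>f\<in>F. f g = 0}"
  proof (rule Set.set_eqI, rule iffI)
    fix g assume g: "g \<in> PPc n i j"
    then have gGL: "g \<in> GL n" by (rule PPc_GL)
    have gc: "g \<in> carrier_mat n n" using GL_carrier[OF gGL] .
    have d: "det g \<noteq> 0" using GL_det[OF gGL] .
    let ?gi = "(1 / det g) \<cdot>\<^sub>m adj_mat g"
    have a: "adj_mat g \<in> carrier_mat n n" "adj_mat g * g = det g \<cdot>\<^sub>m 1\<^sub>m n"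
      using adj_mat[OF gc] by auto
    have e: "(1 / det g) \<cdot>\<^sub>m (det g \<cdot>\<^sub>m 1\<^sub>m n) = 1\<^sub>m n" by (rule eq_matI, insert d, auto)
    have gi: "?gi * g = 1\<^sub>m n" using a gc e by (simp add: mult_smult_assoc_mat[of _ n n])
    have c: "condij n i j g ?gi" using PPc_cond[OF g _ gi] a by simp
    show "g \<in> {g \<in> GL n. \<forall>f\<in>F. f g = 0}"
    proof (intro CollectI conjI ballI gGL)
      fix f assume "f \<in> F"
      then consider (A) a where "i \<le> a" "a < n" "f = adjf n a" | (B) b where "b + 1 < j" "b < n" "f = (\<lambda>A. A $$ (n - 1, b))"
        unfolding F_def by blast
      then show "f g = 0"
      proof cases
        case A
        then have "?gi $$ (a, 0) = 0" using c unfolding condij_def by simp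
        then have "adj_mat g $$ (a, 0) = 0" using a A d n by simp
        then show ?thesis using A adjf_adj[OF gc] by simp
      next
        case B then show ?thesis using c unfolding condij_def by simp
      qed
    qed
  next
    fix g assume g: "g \<in> {g \<in> GL n. \<forall>f\<in>F. f g = 0}"
    then have gGL: "g \<in> GL n" and z: "\<And>f. f \<in> F \<Longrightarrow> f g = 0" by auto
    have gc: "g \<in> carrier_mat n n" using GL_carrier[OF gGL] .
    have d: "det g \<noteq> 0" using GL_det[OF gGL] .
    let ?gi = "(1 / det g) \<cdot>\<^sub>m adj_mat g"
    have a: "adj_mat g \<in> carrier_mat n n" "adj_mat g * g = det g \<cdot>\<^sub>m 1\<^sub>m n" "g * adj_mat g = det g \<cdot>\<^sub>m 1\<^sub>m n"
      using adj_mat[OF gc] by auto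
    have e: "(1 / det g) \<cdot>\<^sub>m (det g \<cdot>\<^sub>m 1\<^sub>m n) = 1\<^sub>m n" by (rule eq_matI, insert d, auto)
    have gi1: "?gi * g = 1\<^sub>m n" using a gc e by (simp add: mult_smult_assoc_mat[of _ n n])
    have gi2: "g * ?gi = 1\<^sub>m n" using a gc e by (simp add: mult_smult_distrib[of g n n])
    have c: "condij n i j g ?gi" unfolding condij_def
    proof (intro conjI allI impI)
      fix a' assume a': "i \<le> a' \<and> a' < n"
      then have "adjf n a' g = 0" using z unfolding F_def by auto
      then show "?gi $$ (a', 0) = 0" using adjf_adj[OF gc] a' a n by simp
    next
      fix b assume "b + 1 < j \<and> b < n"
      then show "g $$ (n - 1, b) = 0" using z unfolding F_def by auto
    qed
    show "g \<in> PPc n i j" by (rule PPc_I[OF gc _ gi1 gi2 c], insert a, simp)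
  qed
  then show "zariski_closed_GL n (\<Union> (XK n (Hij n i j)))"
    unfolding zariski_closed_GL_def Union_XK[OF n] using F by blast
qed

lemma flag_closed_empty: "flag_closed n {}"
  unfolding flag_closed_def zariski_closed_GL_def
  by (auto intro!: exI[of _ "{\<lambda>_. 1}"] poly_fun.const)

lemma flag_closed_Un:
  assumes "flag_closed n Z1" "flag_closed n Z2" shows "flag_closed n (Z1 \<union> Z2)"
proof -
  obtain F1 where F1: "F1 \<subseteq> poly_fun n" "\<Union>Z1 = {g \<in> GL n. \<forall>f\<in>F1. f g = 0}"
    using assms(1) unfolding flag_closed_def zariski_closed_GL_def by blast
  obtain F2 where F2: "F2 \<subseteq> poly_fun n" "\<Union>Z2 = {g \<in> GL n. \<forall>f\<in>F2. f g = 0}"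
    using assms(2) unfolding flag_closed_def zariski_closed_GL_def by blast
  define F where "F = {(\<lambda>A. f1 A * f2 A) | f1 f2. f1 \<in> F1 \<and> f2 \<in> F2}"
  have F: "F \<subseteq> poly_fun n" unfolding F_def using F1 F2 poly_fun.mult by blast
  have "\<Union>(Z1 \<union> Z2) = {g \<in> GL n. \<forall>f\<in>F. f g = 0}"
  proof (rule Set.set_eqI, rule iffI)
    fix g assume "g \<in> \<Union>(Z1 \<union> Z2)"
    then have "g \<in> \<Union>Z1 \<or> g \<in> \<Union>Z2" by auto
    then show "g \<in> {g \<in> GL n. \<forall>f\<in>F. f g = 0}" using F1 F2 unfolding F_def by auto
  next
    fix g assume g: "g \<in> {g \<in> GL n. \<forall>f\<in>F. f g = 0}"
    show "g \<in> \<Union>(Z1 \<union> Z2)"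
    proof (rule ccontr)
      assume "g \<notin> \<Union>(Z1 \<union> Z2)"
      then have "g \<notin> \<Union>Z1" "g \<notin> \<Union>Z2" by auto
      then obtain f1 f2 where f12: "f1 \<in> F1" "f1 g \<noteq> 0" "f2 \<in> F2" "f2 g \<noteq> 0" using F1 F2 g by auto
      then have "(\<lambda>A. f1 A * f2 A) \<in> F" unfolding F_def by blast
      then have "f1 g * f2 g = 0" using g by auto
      then show False using f12 by simp
    qed
  qed
  then show ?thesis using assms F unfolding flag_closed_def zariski_closed_GL_def by blast
qed

definition ZS :: "nat \<Rightarrow> (nat \<times> nat) set \<Rightarrow> complex mat set" where
  "ZS n Z = {x \<in> GL n. \<forall>k<n. \<forall>l<n. (k, l) \<in> Z \<longrightarrow> x $$ (k, l) = 0}"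

definition prodset :: "complex mat set \<Rightarrow> complex mat set \<Rightarrow> complex mat set" where
  "prodset A B = {a * b | a b. a \<in> A \<and> b \<in> B}"

lemma line0: "A \<in> carrier_mat n n \<Longrightarrow> B \<in> carrier_mat n n \<Longrightarrow> A + (0::complex) \<cdot>\<^sub>m B = A"
  by (rule eq_matI) auto

lemma line1: "A \<in> carrier_mat n n \<Longrightarrow> B \<in> carrier_mat n n \<Longrightarrow> A + (1::complex) \<cdot>\<^sub>m (B - A) = B"
  by (rule eq_matI) auto

lemma ZS_line:
  assumes x: "x \<in> ZS n Z" and y: "y \<in> ZS n Z" and d: "det (x + t \<cdot>\<^sub>m (y - x)) \<noteq> 0"
  shows "x + t \<cdot>\<^sub>m (y - x) \<in> ZS n Z"
proof -
  have xc: "x \<in> carrier_mat n n" and yc: "y \<in> carrier_mat n n"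
    using x y GL_carrier unfolding ZS_def by auto
  have c: "x + t \<cdot>\<^sub>m (y - x) \<in> carrier_mat n n" using xc yc by auto
  have "x + t \<cdot>\<^sub>m (y - x) \<in> GL n" using det_GL[OF c d] .
  moreover have "\<forall>k<n. \<forall>l<n. (k, l) \<in> Z \<longrightarrow> (x + t \<cdot>\<^sub>m (y - x)) $$ (k, l) = 0"
    using x y xc yc unfolding ZS_def by auto
  ultimately show ?thesis unfolding ZS_def by auto
qed

lemma ZS_carrier: "x \<in> ZS n Z \<Longrightarrow> x \<in> carrier_mat n n" unfolding ZS_def using GL_carrier by auto

lemma CC_prod: "CC n (prodset (ZS n Z1) (ZS n Z2))"
  unfolding CC_def
proof (intro ballI)
  fix a b assume a: "a \<in> prodset (ZS n Z1) (ZS n Z2)" and b: "b \<in> prodset (ZS n Z1) (ZS n Z2)"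
  obtain d1 r1 where ar: "a = d1 * r1" "d1 \<in> ZS n Z1" "r1 \<in> ZS n Z2" using a unfolding prodset_def by auto
  obtain d2 r2 where br: "b = d2 * r2" "d2 \<in> ZS n Z1" "r2 \<in> ZS n Z2" using b unfolding prodset_def by auto
  have c: "d1 \<in> carrier_mat n n" "d2 \<in> carrier_mat n n" "r1 \<in> carrier_mat n n" "r2 \<in> carrier_mat n n"
    using ar br ZS_carrier by auto
  define \<delta> where "\<delta> = (\<lambda>t. d1 + t \<cdot>\<^sub>m (d2 - d1))"
  define \<rho> where "\<rho> = (\<lambda>t. r1 + t \<cdot>\<^sub>m (r2 - r1))"
  define \<gamma> where "\<gamma> = (\<lambda>t. \<delta> t * \<rho> t)"
  define q where "q = (\<lambda>t. det (\<delta> t) * det (\<rho> t))"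
  have pd: "pcurve n \<delta>" unfolding \<delta>_def by (rule pcurve_line, insert c, auto)
  have pr: "pcurve n \<rho>" unfolding \<rho>_def by (rule pcurve_line, insert c, auto)
  have pg: "pcurve n \<gamma>" unfolding \<gamma>_def by (rule pcurve_mult[OF pd pr])
  have pq: "ispoly q" unfolding q_def by (rule ispoly_mult[OF det_curve[OF pd] det_curve[OF pr]])
  have d0: "\<delta> 0 = d1" "\<rho> 0 = r1" unfolding \<delta>_def \<rho>_def using c line0 by (auto intro: line0)
  have d1': "\<delta> 1 = d2" "\<rho> 1 = r2" unfolding \<delta>_def \<rho>_def using c by (auto intro: line1)
  have q0: "q 0 \<noteq> 0" unfolding q_def d0 using GL_det ar unfolding ZS_def by auto
  have "\<forall>t. q t \<noteq> 0 \<longrightarrow> \<gamma> t \<in> prodset (ZS n Z1) (ZS n Z2)"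
  proof (intro allI impI)
    fix t assume "q t \<noteq> 0"
    then have "det (\<delta> t) \<noteq> 0" "det (\<rho> t) \<noteq> 0" unfolding q_def by auto
    then have "\<delta> t \<in> ZS n Z1" "\<rho> t \<in> ZS n Z2" unfolding \<delta>_def \<rho>_def using ZS_line ar br by auto
    then show "\<gamma> t \<in> prodset (ZS n Z1) (ZS n Z2)" unfolding \<gamma>_def prodset_def by auto
  qed
  moreover have "\<gamma> 0 = a" "\<gamma> 1 = b" unfolding \<gamma>_def using d0 d1' ar br by auto
  ultimately show "\<exists>\<gamma> q. pcurve n \<gamma> \<and> ispoly q \<and> \<gamma> 0 = a \<and> \<gamma> 1 = b \<and> (\<exists>t. q t \<noteq> 0) \<and>
          (\<forall>t. q t \<noteq> 0 \<longrightarrow> \<gamma> t \<in> prodset (ZS n Z1) (ZS n Z2))"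
    using pg pq q0 by blast
qed

lemma inv_col0:
  fixes g ginv :: "complex mat"
  assumes g: "g \<in> carrier_mat n n" and gi: "ginv \<in> carrier_mat n n" and e: "ginv * g = 1\<^sub>m n"
    and w: "w \<in> carrier_vec n" and gw: "g *\<^sub>v w = unit_vec n 0" and k: "k < n"
  shows "ginv $$ (k, 0) = w $ k"
proof -
  have "ginv *\<^sub>v (g *\<^sub>v w) = (ginv * g) *\<^sub>v w" using assoc_mult_mat_vec[OF gi g w] by simp
  also have "\<dots> = w" using e w by simp
  finally have "w = ginv *\<^sub>v unit_vec n 0" using gw by simp
  then have "w $ k = row ginv k \<bullet> unit_vec n 0" using gi k by simp
  also have "\<dots> = ginv $$ (k, 0)" using gi k by simp
  finally show ?thesis by simp
qed

lemma sum_single: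
  assumes "finite A" "m \<in> A" "\<And>y. y \<in> A \<Longrightarrow> y \<noteq> m \<Longrightarrow> f y = 0"
  shows "sum f A = f m"
proof -
  have "sum f A = f m + sum f (A - {m})" using sum.remove[OF assms(1,2)] .
  also have "sum f (A - {m}) = 0" using assms(3) by (intro sum.neutral) auto
  finally show ?thesis by simp
qed

lemma sum_two:
  assumes "finite A" "m \<in> A" "c \<in> A" "m \<noteq> c" "\<And>y. y \<in> A \<Longrightarrow> y \<noteq> m \<Longrightarrow> y \<noteq> c \<Longrightarrow> f y = 0"
  shows "sum f A = f m + f c"
proof -
  have "sum f A = f m + sum f (A - {m})" using sum.remove[OF assms(1,2)] .
  also have "sum f (A - {m}) = f c" using assms by (intro sum_single) auto
  finally show ?thesis .
qed

definition Dz :: "nat \<Rightarrow> nat \<Rightarrow> nat \<Rightarrow> (nat \<times> nat) set" where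
  "Dz n i j = {(k, l). l = i - 1 \<and> k \<noteq> 0} \<union> {(k, l). k = n - 1 \<and> l + 1 < j}"

definition Rz :: "nat \<Rightarrow> nat \<Rightarrow> (nat \<times> nat) set" where
  "Rz i j = {(k, l). i \<le> k \<and> l < i} \<union> {(k, l). j - 1 \<le> k \<and> l + 1 < j}"

definition TT :: "nat \<Rightarrow> nat \<Rightarrow> nat \<Rightarrow> complex mat set" where
  "TT n i j = prodset (ZS n (Dz n i j)) (ZS n (Rz i j))"

lemma T_sub:
  assumes n: "2 \<le> n" and i: "1 \<le> i" "i \<le> n" and j: "1 \<le> j" "j \<le> n"
  shows "TT n i j \<subseteq> PPc n i j"
proof
  fix g assume "g \<in> TT n i j"
  then obtain d r where g: "g = d * r" and d: "d \<in> ZS n (Dz n i j)" and r: "r \<in> ZS n (Rz i j)"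
    unfolding TT_def prodset_def by auto
  have dG: "d \<in> GL n" and rG: "r \<in> GL n" using d r unfolding ZS_def by auto
  have dc: "d \<in> carrier_mat n n" and rc: "r \<in> carrier_mat n n" using dG rG GL_carrier by auto
  obtain di where di: "di \<in> carrier_mat n n" "di * d = 1\<^sub>m n" "d * di = 1\<^sub>m n" using GL_inv[OF dG] by blast
  obtain ri where ri: "ri \<in> carrier_mat n n" "ri * r = 1\<^sub>m n" "r * ri = 1\<^sub>m n" using GL_inv[OF rG] by blast
  have dz: "k < n \<Longrightarrow> l < n \<Longrightarrow> (k, l) \<in> Dz n i j \<Longrightarrow> d $$ (k, l) = 0" for k l
    using d unfolding ZS_def by auto
  have rz: "k < n \<Longrightarrow> l < n \<Longrightarrow> (k, l) \<in> Rz i j \<Longrightarrow> r $$ (k, l) = 0" for k l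
    using r unfolding ZS_def by auto
  have e1: "(ri * di) * (d * r) = 1\<^sub>m n"
  proof -
    have "(ri * di) * (d * r) = ri * (di * (d * r))" by (rule assoc_mult_mat[OF ri(1) di(1) mult_carrier_mat[OF dc rc]])
    also have "di * (d * r) = (di * d) * r" by (rule assoc_mult_mat[OF di(1) dc rc, symmetric])
    finally show ?thesis using di ri rc by simp
  qed
  have e2: "(d * r) * (ri * di) = 1\<^sub>m n"
  proof -
    have "(d * r) * (ri * di) = d * (r * (ri * di))" by (rule assoc_mult_mat[OF dc rc mult_carrier_mat[OF ri(1) di(1)]])
    also have "r * (ri * di) = (r * ri) * di" by (rule assoc_mult_mat[OF rc ri(1) di(1), symmetric])
    finally show ?thesis using di ri dc by simp
  qed
  have im: "i - 1 < n" using i by simp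
  have dcol: "di $$ (c, 0) * d $$ (0, i - 1) = (if c = i - 1 then 1 else 0)" if c: "c < n" for c
  proof -
    have "(di * d) $$ (c, i - 1) = (\<Sum>k<n. di $$ (c, k) * d $$ (k, i - 1))" by (rule mult_entry[OF di(1) dc c im])
    also have "\<dots> = di $$ (c, 0) * d $$ (0, i - 1)"
      by (rule sum_single, insert n dz im, auto simp: Dz_def)
    finally show ?thesis using di(2) c im by simp
  qed
  have di0: "di $$ (c, 0) = 0" if c: "c < n" "c \<noteq> i - 1" for c
  proof -
    have "d $$ (0, i - 1) \<noteq> 0" using dcol[OF im] by auto
    then show ?thesis using dcol[OF c(1)] c(2) by simp
  qed
  have c: "condij n i j (d * r) (ri * di)" unfolding condij_def
  proof (intro conjI allI impI)
    fix a assume a: "i \<le> a \<and> a < n"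
    have "(ri * di) $$ (a, 0) = (\<Sum>c<n. ri $$ (a, c) * di $$ (c, 0))" using mult_entry[OF ri(1) di(1)] a by simp
    also have "\<dots> = ri $$ (a, i - 1) * di $$ (i - 1, 0)"
      by (rule sum_single, insert im di0, auto)
    also have "ri $$ (a, i - 1) = 0"
      by (rule inv_cut[OF rc ri(1) ri(3) ri(2), of i], insert a i rz, auto simp: Rz_def)
    finally show "(ri * di) $$ (a, 0) = 0" by simp
  next
    fix l assume l: "l + 1 < j \<and> l < n"
    have nn: "n - 1 < n" using n by simp
    have "(d * r) $$ (n - 1, l) = (\<Sum>c<n. d $$ (n - 1, c) * r $$ (c, l))" using mult_entry[OF dc rc nn] l by simp
    also have "\<dots> = 0"
    proof (rule sum.neutral, intro ballI)
      fix c assume c: "c \<in> {..<n}"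
      show "d $$ (n - 1, c) * r $$ (c, l) = 0"
      proof (cases "c + 1 < j")
        case True then show ?thesis using dz[of "n - 1" c] nn c by (simp add: Dz_def)
      next
        case False
        then have "j - 1 \<le> c" by simp
        then have "r $$ (c, l) = 0" using rz[of c l] l c by (simp add: Rz_def)
        then show ?thesis by simp
      qed
    qed
    finally show "(d * r) $$ (n - 1, l) = 0" .
  qed
  show "g \<in> PPc n i j" unfolding g
    by (rule PPc_I[OF mult_carrier_mat[OF dc rc] mult_carrier_mat[OF ri(1) di(1)] e1 e2 c])
qed

lemma T_mem:
  assumes n: "2 \<le> n" and i: "1 \<le> i" "i \<le> n" and j: "1 \<le> j" "j \<le> n"
    and a: "a \<in> PPc n i j" and ai: "ainv \<in> carrier_mat n n" "ainv * a = 1\<^sub>m n" "a * ainv = 1\<^sub>m n"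
    and c: "c < i" "i < j \<or> j \<le> c + 1" "ainv $$ (c, 0) \<noteq> 0"
  shows "a \<in> TT n i j"
proof -
  define m where "m = i - 1"
  have mn: "m < n" "m < i" using i unfolding m_def by auto
  have cn: "c < n" using c i by simp
  define u where "u = (\<lambda>k. ainv $$ (k, 0))"
  have ac: "a \<in> carrier_mat n n" using a PPc_GL GL_carrier by blast
  have cond: "condij n i j a ainv" using PPc_cond[OF a ai(1,2)] .
  have u0: "k \<ge> i \<Longrightarrow> k < n \<Longrightarrow> u k = 0" for k using cond unfolding condij_def u_def by auto
  have a0: "l + 1 < j \<Longrightarrow> l < n \<Longrightarrow> a $$ (n - 1, l) = 0" for l using cond unfolding condij_def by auto
  define s where "s = mat n n (\<lambda>(x, y). if y = m then u x else if y = c then (if x = m then 1 else 0)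
      else (if x = y then 1 else 0))"
  have sc: "s \<in> carrier_mat n n" unfolding s_def by simp
  have sent: "x < n \<Longrightarrow> y < n \<Longrightarrow> s $$ (x, y) = (if y = m then u x else if y = c then (if x = m then 1 else 0)
      else (if x = y then 1 else 0))" for x y unfolding s_def by simp
  have sv: "(s *\<^sub>v v) $ x = u x * v $ m + (if c \<noteq> m \<and> x = m then v $ c else 0) + (if x \<noteq> m \<and> x \<noteq> c then v $ x else 0)"
    if v: "v \<in> carrier_vec n" and x: "x < n" for v x
  proof -
    have "(s *\<^sub>v v) $ x = (\<Sum>y<n. s $$ (x, y) * v $ y)"
      using sc v x by (auto simp: scalar_prod_def atLeast0LessThan intro!: sum.cong)
    also have "\<dots> = (\<Sum>y<n. (if y = m then u x * v $ m else 0) + (if y = c then (if c \<noteq> m \<and> x = m then v $ c else 0) else 0)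
        + (if y = x then (if x \<noteq> m \<and> x \<noteq> c then v $ x else 0) else 0))"
      by (rule sum.cong[OF refl], insert x, auto simp: sent)
    also have "\<dots> = u x * v $ m + (if c \<noteq> m \<and> x = m then v $ c else 0) + (if x \<noteq> m \<and> x \<noteq> c then v $ x else 0)"
      using mn cn x by (simp add: sum.distrib)
    finally show ?thesis .
  qed
  have uc: "u c \<noteq> 0" using c(3) unfolding u_def .
  have "det s \<noteq> 0"
  proof
    assume "det s = 0"
    then obtain v where v: "v \<in> carrier_vec n" "v \<noteq> 0\<^sub>v n" "s *\<^sub>v v = 0\<^sub>v n"
      using det_0_iff_vec_prod_zero[OF sc] by blast
    have z: "x < n \<Longrightarrow> (s *\<^sub>v v) $ x = 0" for x using v(3) by simp
    have vm: "v $ m = 0"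
    proof (cases "c = m")
      case True
      then show ?thesis using z[OF mn(1)] sv[OF v(1) mn(1)] uc by simp
    next
      case False
      then show ?thesis using z[OF cn] sv[OF v(1) cn] uc by simp
    qed
    have "v = 0\<^sub>v n"
    proof (rule eq_vecI)
      fix x assume x: "x < dim_vec (0\<^sub>v n :: complex vec)"
      then have x': "x < n" by simp
      show "v $ x = 0\<^sub>v n $ x"
      proof (cases "x = m")
        case True then show ?thesis using vm x' by simp
      next
        case xm: False
        show ?thesis
        proof (cases "x = c")
          case True
          then show ?thesis using z[OF mn(1)] sv[OF v(1) mn(1)] vm xm x' by simp
        next
          case False
          then show ?thesis using z[OF x'] sv[OF v(1) x'] vm xm x' by simp
        qed
      qed
    qed (use v in simp)
    then show False using v(2) by simp
  qed
  then have sG: "s \<in> GL n" using det_GL[OF sc] by simp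
  have sz: "k < n \<Longrightarrow> l < n \<Longrightarrow> (k, l) \<in> Rz i j \<Longrightarrow> s $$ (k, l) = 0" for k l
  proof -
    assume kl: "k < n" "l < n" "(k, l) \<in> Rz i j"
    then have cut: "(i \<le> k \<and> l < i) \<or> (j - 1 \<le> k \<and> l + 1 < j)" unfolding Rz_def by auto
    show "s $$ (k, l) = 0"
    proof (cases "l = m")
      case True
      then have "i \<le> k" using cut mn unfolding m_def by auto
      then show ?thesis using True sent kl u0 by simp
    next
      case lm: False
      show ?thesis
      proof (cases "l = c")
        case True
        then have "k \<noteq> m" using cut c(1,2) unfolding m_def by auto
        then show ?thesis using True lm sent kl by simp
      next
        case False
        have "k \<noteq> l" using cut by auto
        then show ?thesis using False lm sent kl by simp
      qed
    qed
  qed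
  have sZ: "s \<in> ZS n (Rz i j)" unfolding ZS_def using sG sz by auto
  obtain si where si: "si \<in> carrier_mat n n" "si * s = 1\<^sub>m n" "s * si = 1\<^sub>m n" using GL_inv[OF sG] by blast
  have siG: "si \<in> GL n" using GL_I[OF si(1) sc si(3) si(2)] .
  have siz: "si $$ (k, l) = 0" if kl: "k < n" "l < n" "(k, l) \<in> Rz i j" for k l
  proof -
    have cut: "(i \<le> k \<and> l < i) \<or> (j - 1 \<le> k \<and> l + 1 < j)" using kl unfolding Rz_def by auto
    then show ?thesis
    proof
      assume h: "i \<le> k \<and> l < i"
      show ?thesis by (rule inv_cut[OF sc si(1) si(3) si(2), of i], insert h kl sz, auto simp: Rz_def)
    next
      assume h: "j - 1 \<le> k \<and> l + 1 < j"
      show ?thesis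
      proof (rule inv_cut[OF sc si(1) si(3) si(2), of "j - 1"])
        fix k' l' assume kl': "j - 1 \<le> k'" "k' < n" "l' < j - 1"
        then have "l' < n" "(k', l') \<in> Rz i j" using j unfolding Rz_def by auto
        then show "s $$ (k', l') = 0" using sz kl' by simp
      qed (insert h kl, auto)
    qed
  qed
  have siZ: "si \<in> ZS n (Rz i j)" unfolding ZS_def using siG siz by auto
  define d where "d = a * s"
  have dc: "d \<in> carrier_mat n n" unfolding d_def using ac sc by simp
  have dG: "d \<in> GL n" unfolding d_def using GL_mult[OF PPc_GL[OF a] sG] .
  have dent: "d $$ (k, l) = (if l = m then (if k = 0 then 1 else 0) else if l = c then a $$ (k, m) else a $$ (k, l))"
    if kl: "k < n" "l < n" for k l
  proof -
    have "d $$ (k, l) = (\<Sum>y<n. a $$ (k, y) * s $$ (y, l))" unfolding d_def by (rule mult_entry[OF ac sc kl])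
    also have "\<dots> = (if l = m then (if k = 0 then 1 else 0) else if l = c then a $$ (k, m) else a $$ (k, l))"
    proof (cases "l = m")
      case True
      have "(\<Sum>y<n. a $$ (k, y) * s $$ (y, l)) = (\<Sum>y<n. a $$ (k, y) * ainv $$ (y, 0))"
        using True sent kl by (intro sum.cong) (auto simp: u_def)
      also have "\<dots> = (a * ainv) $$ (k, 0)" using mult_entry[OF ac ai(1) kl(1)] n by simp
      also have "\<dots> = (if k = 0 then 1 else 0)" using ai(3) kl n by simp
      finally show ?thesis using True by simp
    next
      case lm: False
      show ?thesis
      proof (cases "l = c")
        case True
        have "(\<Sum>y<n. a $$ (k, y) * s $$ (y, l)) = a $$ (k, m) * s $$ (m, l)"
          by (rule sum_single, insert mn kl True lm sent, auto)
        then show ?thesis using True lm sent mn kl by simp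
      next
        case False
        have "(\<Sum>y<n. a $$ (k, y) * s $$ (y, l)) = a $$ (k, l) * s $$ (l, l)"
          by (rule sum_single, insert kl False lm sent, auto)
        then show ?thesis using False lm sent kl by simp
      qed
    qed
    finally show ?thesis .
  qed
  have dz: "d $$ (k, l) = 0" if kl: "k < n" "l < n" "(k, l) \<in> Dz n i j" for k l
  proof -
    have h: "(l = m \<and> k \<noteq> 0) \<or> (k = n - 1 \<and> l + 1 < j)" using kl unfolding Dz_def m_def by auto
    show ?thesis
    proof (cases "l = m")
      case True then show ?thesis using dent[OF kl(1,2)] h n by auto
    next
      case lm: False
      then have k: "k = n - 1" "l + 1 < j" using h by auto
      show ?thesis
      proof (cases "l = c")
        case True
        then have "i < j" using c(2) k(2) by auto
        then have "m + 1 < j" unfolding m_def using i by simp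
        then show ?thesis using dent[OF kl(1,2)] True lm k a0 mn by simp
      next
        case False then show ?thesis using dent[OF kl(1,2)] lm k a0 kl by simp
      qed
    qed
  qed
  have dZ: "d \<in> ZS n (Dz n i j)" unfolding ZS_def using dG dz by auto
  have "d * si = a"
  proof -
    have "d * si = a * (s * si)" unfolding d_def by (rule assoc_mult_mat[OF ac sc si(1)])
    then show ?thesis using si(3) ac by simp
  qed
  then show ?thesis unfolding TT_def prodset_def using dZ siZ by blast
qed

lemma pcurve_const: "A \<in> carrier_mat n n \<Longrightarrow> pcurve n (\<lambda>t. A)"
  unfolding pcurve_def using ispoly_const by auto

lemma curve_lemma:
  assumes n: "2 \<le> n" and i: "1 \<le> i" "i \<le> n" and j: "1 \<le> j" "j \<le> n" and ij: "i \<noteq> j"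
    and a: "a \<in> PPc n i j" and ai: "ainv \<in> carrier_mat n n" "ainv * a = 1\<^sub>m n" "a * ainv = 1\<^sub>m n"
    and na: "\<And>c. c < i \<Longrightarrow> i < j \<or> j \<le> c + 1 \<Longrightarrow> ainv $$ (c, 0) = 0"
  shows "\<exists>\<gamma> q. pcurve n \<gamma> \<and> ispoly q \<and> \<gamma> 0 = a \<and> (\<exists>t. q t \<noteq> 0) \<and> (\<forall>t. q t \<noteq> 0 \<longrightarrow> \<gamma> t \<in> TT n i j)"
proof -
  define u where "u = (\<lambda>k. ainv $$ (k, 0))"
  have ac: "a \<in> carrier_mat n n" using a PPc_GL GL_carrier by blast
  have cond: "condij n i j a ainv" using PPc_cond[OF a ai(1,2)] .
  have u0: "k \<ge> i \<Longrightarrow> k < n \<Longrightarrow> u k = 0" for k using cond unfolding condij_def u_def by auto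
  have a0: "l + 1 < j \<Longrightarrow> l < n \<Longrightarrow> a $$ (n - 1, l) = 0" for l using cond unfolding condij_def by auto
  obtain c where c: "c < n" "u c \<noteq> 0" using col_first_nz[OF ac ai(1) ai(3)] n unfolding u_def by auto
  have ci: "c < i"
  proof (rule ccontr)
    assume "\<not> c < i" then have "u c = 0" using u0 c(1) by simp
    then show False using c(2) by simp
  qed
  have cj0: "\<not> (i < j \<or> j \<le> c + 1)" using na[OF ci] c(2) unfolding u_def by auto
  then have cj: "c + 1 < j" "\<not> i < j" by auto
  then have ji: "j < i" using ij by simp
  define p where "p = j - 1"
  define m where "m = i - 1"
  have pm: "p < m" "m < i" "p < i" "m < n" "p < n" "c < p" "c \<noteq> m" "c \<noteq> p" "p \<noteq> m"
    using ji i j cj ci unfolding p_def m_def by auto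
  define \<beta> where "\<beta> = a $$ (n - 1, p)"
  define \<alpha> where "\<alpha> = a $$ (n - 1, m)"
  define xf where "xf = (\<lambda>k. if \<beta> = 0 then (if k = p then 1 else 0) else (if k = p then \<alpha> else if k = m then - \<beta> else (0::complex)))"
  have xf0: "k \<noteq> p \<Longrightarrow> k \<noteq> m \<Longrightarrow> xf k = 0" for k unfolding xf_def by auto
  have xfc: "xf c = 0" using xf0 pm by simp
  define q0 where "q0 = (if \<beta> = 0 then p else m)"
  have q0: "q0 < i" "j \<le> q0 + 1" "xf q0 \<noteq> 0" "q0 < n"
    using pm j unfolding q0_def xf_def p_def m_def by auto
  have uq0: "u q0 = 0" using na[OF q0(1)] q0(2) unfolding u_def by simp
  define ax where "ax = (\<lambda>k. \<Sum>z<n. a $$ (k, z) * xf z)"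
  have ax0: "ax (n - 1) = 0"
  proof (cases "\<beta> = 0")
    case True
    have "ax (n - 1) = a $$ (n - 1, p) * xf p"
      unfolding ax_def by (rule sum_single, insert pm xf0 True, auto simp: xf_def)
    then show ?thesis using True unfolding \<beta>_def by simp
  next
    case False
    have "ax (n - 1) = a $$ (n - 1, p) * xf p + a $$ (n - 1, m) * xf m"
      unfolding ax_def by (rule sum_two, insert pm xf0, auto)
    then show ?thesis using False pm unfolding xf_def \<alpha>_def \<beta>_def by simp
  qed
  define X where "X = mat n n (\<lambda>(k, l). if l = c then xf k else 0)"
  have Xc: "X \<in> carrier_mat n n" unfolding X_def by simp
  define AX where "AX = a * X"
  have AXc: "AX \<in> carrier_mat n n" unfolding AX_def using ac Xc by simp
  have AXe: "AX $$ (k, l) = (if l = c then ax k else 0)" if kl: "k < n" "l < n" for k l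
  proof -
    have "AX $$ (k, l) = (\<Sum>z<n. a $$ (k, z) * X $$ (z, l))" unfolding AX_def by (rule mult_entry[OF ac Xc kl])
    also have "\<dots> = (if l = c then ax k else 0)" unfolding ax_def X_def using kl by (auto intro: sum.cong)
    finally show ?thesis .
  qed
  define \<gamma> where "\<gamma> = (\<lambda>t. a + t \<cdot>\<^sub>m AX)"
  define q where "q = (\<lambda>t. t * det (\<gamma> t))"
  have pg: "pcurve n \<gamma>" unfolding \<gamma>_def by (rule pcurve_line[OF ac AXc])
  have pq: "ispoly q" unfolding q_def by (rule ispoly_mult[OF ispoly_id det_curve[OF pg]])
  have g0: "\<gamma> 0 = a" unfolding \<gamma>_def using line0[OF ac AXc] .
  have gc: "\<gamma> t \<in> carrier_mat n n" for t unfolding \<gamma>_def using ac AXc by simp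
  have "det (\<gamma> 0) \<noteq> 0" using g0 GL_det[OF PPc_GL[OF a]] by simp
  then obtain t0 where t0: "t0 \<noteq> 0" "det (\<gamma> t0) \<noteq> 0"
    using ispoly_nz_mult[OF ispoly_id det_curve[OF pg], of 1 0] by auto
  have qnz: "\<exists>t. q t \<noteq> 0" using t0 unfolding q_def by auto
  have inT: "\<gamma> t \<in> TT n i j" if qt: "q t \<noteq> 0" for t
  proof -
    have t: "t \<noteq> 0" "det (\<gamma> t) \<noteq> 0" using qt unfolding q_def by auto
    have gG: "\<gamma> t \<in> GL n" using det_GL[OF gc t(2)] .
    obtain gi where gi: "gi \<in> carrier_mat n n" "gi * \<gamma> t = 1\<^sub>m n" "\<gamma> t * gi = 1\<^sub>m n" using GL_inv[OF gG] by blast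
    define w where "w = vec n (\<lambda>k. u k - t * u c * xf k)"
    have wc: "w \<in> carrier_vec n" unfolding w_def by simp
    have gw: "\<gamma> t *\<^sub>v w = unit_vec n 0"
    proof (rule eq_vecI)
      fix k assume "k < dim_vec (unit_vec n 0 :: complex vec)"
      then have k: "k < n" by simp
      have "(\<gamma> t *\<^sub>v w) $ k = (\<Sum>y<n. \<gamma> t $$ (k, y) * w $ y)"
        using carrier_matD[OF gc[of t]] carrier_vecD[OF wc] k by (auto simp: scalar_prod_def atLeast0LessThan intro!: sum.cong)
      also have "\<dots> = (\<Sum>y<n. a $$ (k, y) * u y - t * u c * (a $$ (k, y) * xf y) + t * (AX $$ (k, y) * w $ y))"
        by (rule sum.cong[OF refl], insert k ac AXc, auto simp: \<gamma>_def w_def algebra_simps)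
      also have "\<dots> = (\<Sum>y<n. a $$ (k, y) * u y) - t * u c * ax k + t * (\<Sum>y<n. AX $$ (k, y) * w $ y)"
        unfolding ax_def by (simp add: sum.distrib sum_subtractf sum_distrib_left)
      also have "(\<Sum>y<n. a $$ (k, y) * u y) = (a * ainv) $$ (k, 0)"
        unfolding u_def using mult_entry[OF ac ai(1) k] n by simp
      also have "\<dots> = (if k = 0 then 1 else 0)" using ai(3) k n by simp
      also have "(\<Sum>y<n. AX $$ (k, y) * w $ y) = AX $$ (k, c) * w $ c"
        by (rule sum_single, insert c k AXe, auto)
      also have "\<dots> = ax k * u c" using AXe[OF k c(1)] xfc c(1) unfolding w_def by simp
      finally show "(\<gamma> t *\<^sub>v w) $ k = unit_vec n 0 $ k" using k n by (simp add: algebra_simps)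
    qed (use carrier_matD[OF gc[of t]] in simp)
    have gi0: "k < n \<Longrightarrow> gi $$ (k, 0) = u k - t * u c * xf k" for k
      using inv_col0[OF gc gi(1) gi(2) wc gw] unfolding w_def by simp
    have cnd: "condij n i j (\<gamma> t) gi" unfolding condij_def
    proof (intro conjI allI impI)
      fix k assume k: "i \<le> k \<and> k < n"
      then have "k \<noteq> p" "k \<noteq> m" using pm by auto
      then show "gi $$ (k, 0) = 0" using gi0 k u0 xf0 by simp
    next
      fix l assume l: "l + 1 < j \<and> l < n"
      have nn: "n - 1 < n" using n by simp
      have "\<gamma> t $$ (n - 1, l) = a $$ (n - 1, l) + t * AX $$ (n - 1, l)"
        unfolding \<gamma>_def using ac AXc l nn by simp
      also have "\<dots> = 0" using a0 l AXe[OF nn] ax0 by simp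
      finally show "\<gamma> t $$ (n - 1, l) = 0" .
    qed
    have gP: "\<gamma> t \<in> PPc n i j" by (rule PPc_I[OF gc gi(1) gi(2) gi(3) cnd])
    have "gi $$ (q0, 0) \<noteq> 0" using gi0[OF q0(4)] uq0 q0(3) t(1) c(2) by simp
    then show ?thesis using T_mem[OF n i j gP gi q0(1) _ ] q0(2) by blast
  qed
  show ?thesis using pg pq g0 qnz inT by blast
qed

lemma IR_PPc:
  assumes n: "2 \<le> n" and i: "1 \<le> i" "i \<le> n" and j: "1 \<le> j" "j \<le> n" and ij: "i \<noteq> j"
  shows "IR n (PPc n i j)"
proof (rule dense_IR[OF T_sub[OF n i j]])
  show "IR n (TT n i j)" unfolding TT_def by (rule CC_IR[OF CC_prod])
next
  fix a assume a: "a \<in> PPc n i j"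
  obtain ainv where ai: "ainv \<in> carrier_mat n n" "ainv * a = 1\<^sub>m n" "a * ainv = 1\<^sub>m n"
    using a unfolding PPc_def by blast
  have ac: "a \<in> carrier_mat n n" using a PPc_GL GL_carrier by blast
  show "\<exists>\<gamma> q. pcurve n \<gamma> \<and> ispoly q \<and> \<gamma> 0 = a \<and> (\<exists>t. q t \<noteq> 0) \<and> (\<forall>t. q t \<noteq> 0 \<longrightarrow> \<gamma> t \<in> TT n i j)"
  proof (cases "\<exists>c. c < i \<and> (i < j \<or> j \<le> c + 1) \<and> ainv $$ (c, 0) \<noteq> 0")
    case True
    then obtain c where c: "c < i" "i < j \<or> j \<le> c + 1" "ainv $$ (c, 0) \<noteq> 0" by blast
    have "a \<in> TT n i j" by (rule T_mem[OF n i j a ai c])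
    then show ?thesis using pcurve_const[OF ac] ispoly_const[of 1]
      by (intro exI[of _ "\<lambda>t. a"] exI[of _ "\<lambda>t. 1"]) auto
  next
    case False
    then show ?thesis using curve_lemma[OF n i j ij a ai] by blast
  qed
qed

lemma IR_one: "IR 1 (PPc 1 1 1)"
proof -
  have "PPc 1 1 1 = prodset (ZS 1 {}) (ZS 1 {})"
  proof (rule Set.set_eqI, rule iffI)
    fix g assume g: "g \<in> PPc 1 1 1"
    have gG: "g \<in> GL 1" using PPc_GL[OF g] .
    have oG: "1\<^sub>m 1 \<in> GL 1" using GL_I[of "1\<^sub>m 1" 1 "1\<^sub>m 1"] by simp
    have "g = g * 1\<^sub>m 1" using GL_carrier[OF gG] by simp
    then show "g \<in> prodset (ZS 1 {}) (ZS 1 {})" unfolding prodset_def ZS_def using gG oG by blast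
  next
    fix g assume "g \<in> prodset (ZS 1 {}) (ZS 1 {})"
    then obtain d r where g: "g = d * r" "d \<in> GL 1" "r \<in> GL 1" unfolding prodset_def ZS_def by auto
    then have gG: "g \<in> GL 1" using GL_mult by simp
    obtain gi where gi: "gi \<in> carrier_mat 1 1" "gi * g = 1\<^sub>m 1" "g * gi = 1\<^sub>m 1" using GL_inv[OF gG] by blast
    have "condij 1 1 1 g gi" unfolding condij_def by auto
    then show "g \<in> PPc 1 1 1" using PPc_I[OF GL_carrier[OF gG] gi] by simp
  qed
  then show ?thesis using CC_IR[OF CC_prod] by simp
qed

lemma one_PPc: assumes "1 \<le> n" "1 \<le> i" "j \<le> n" shows "1\<^sub>m n \<in> PPc n i j"
proof -
  have "condij n i j (1\<^sub>m n) (1\<^sub>m n)" unfolding condij_def using assms by auto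
  then show ?thesis using PPc_I[of "1\<^sub>m n" n "1\<^sub>m n"] by simp
qed

lemma flagvar_flag: "z \<in> flag_variety n \<Longrightarrow> \<exists>g\<in>GL n. z = flag n g"
  unfolding flag_variety_def by auto

lemma in_closed_flag:
  assumes Z: "flag_closed n Z" and g: "g \<in> GL n" and gz: "g \<in> \<Union>Z"
  shows "flag n g \<in> Z"
proof -
  obtain z where z: "z \<in> Z" "g \<in> z" using gz by blast
  obtain g' where g': "g' \<in> GL n" "z = flag n g'" using flagvar_flag z(1) Z unfolding flag_closed_def by blast
  have "flag n g = flag n g'" using flag_eq[OF GL_carrier[OF g'(1)]] z(2) g'(2) by simp
  then show ?thesis using z g' by simp
qed

lemma irr_XK:
  assumes n: "1 \<le> n" and IRP: "IR n (PPc n i j)" and ne: "PPc n i j \<noteq> {}"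
  shows "flag_irreducible n (XK n (Hij n i j))"
  unfolding flag_irreducible_def
proof (intro conjI allI impI)
  show "XK n (Hij n i j) \<noteq> {}" using ne XK_Hij[OF n] by simp
  show "XK n (Hij n i j) \<subseteq> flag_variety n" by (rule XK_flagvar)
next
  fix Z1 Z2 assume h: "flag_closed n Z1 \<and> flag_closed n Z2 \<and> XK n (Hij n i j) \<subseteq> Z1 \<union> Z2"
  have cl1: "flag_closed n Z1" and cl2: "flag_closed n Z2" and sub: "XK n (Hij n i j) \<subseteq> Z1 \<union> Z2"
    using h by auto
  have "zariski_closed_GL n (\<Union>Z1)" using cl1 unfolding flag_closed_def by simp
  then obtain F1 where F1: "F1 \<subseteq> poly_fun n" "\<Union>Z1 = {g \<in> GL n. \<forall>f\<in>F1. f g = 0}"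
    unfolding zariski_closed_GL_def by blast
  have "zariski_closed_GL n (\<Union>Z2)" using cl2 unfolding flag_closed_def by simp
  then obtain F2 where F2: "F2 \<subseteq> poly_fun n" "\<Union>Z2 = {g \<in> GL n. \<forall>f\<in>F2. f g = 0}"
    unfolding zariski_closed_GL_def by blast
  show "XK n (Hij n i j) \<subseteq> Z1 \<or> XK n (Hij n i j) \<subseteq> Z2"
  proof (rule ccontr)
    assume "\<not> ?thesis"
    then obtain y1 y2 where y: "y1 \<in> XK n (Hij n i j)" "y1 \<notin> Z1" "y2 \<in> XK n (Hij n i j)" "y2 \<notin> Z2"
      by (meson subsetI)
    obtain a where a: "a \<in> PPc n i j" "y1 = flag n a" using y(1) XK_Hij[OF n] by auto
    obtain b where b: "b \<in> PPc n i j" "y2 = flag n b" using y(3) XK_Hij[OF n] by auto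
    have aG: "a \<in> GL n" and bG: "b \<in> GL n" using a b PPc_GL by auto
    have "a \<notin> \<Union>Z1"
    proof
      assume "a \<in> \<Union>Z1"
      then have "flag n a \<in> Z1" by (rule in_closed_flag[OF cl1 aG])
      then show False using a(2) y(2) by simp
    qed
    then obtain f1 where f1: "f1 \<in> F1" "f1 a \<noteq> 0" using F1(2) aG by blast
    have "b \<notin> \<Union>Z2"
    proof
      assume "b \<in> \<Union>Z2"
      then have "flag n b \<in> Z2" by (rule in_closed_flag[OF cl2 bG])
      then show False using b(2) y(4) by simp
    qed
    then obtain f2 where f2: "f2 \<in> F2" "f2 b \<noteq> 0" using F2(2) bG by blast
    have p1: "f1 \<in> poly_fun n" and p2: "f2 \<in> poly_fun n" using f1 f2 F1 F2 by auto
    have e1: "\<exists>a\<in>PPc n i j. f1 a \<noteq> 0" using a(1) f1(2) by blast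
    have e2: "\<exists>b\<in>PPc n i j. f2 b \<noteq> 0" using b(1) f2(2) by blast
    have "\<exists>c\<in>PPc n i j. f1 c \<noteq> 0 \<and> f2 c \<noteq> 0"
      using bspec[OF bspec[OF IRP[unfolded IR_def] p1] p2] e1 e2 by blast
    then obtain c where c: "c \<in> PPc n i j" "f1 c \<noteq> 0" "f2 c \<noteq> 0" by blast
    have cG: "c \<in> GL n" using c PPc_GL by auto
    have "flag n c \<in> XK n (Hij n i j)" using c XK_Hij[OF n] by simp
    then have fc: "flag n c \<in> Z1 \<union> Z2" using sub by blast
    have cc: "c \<in> flag n c" using flag_self[OF GL_carrier[OF cG]] .
    have "c \<in> \<Union>Z1 \<or> c \<in> \<Union>Z2" using fc cc by blast
    then show False
    proof
      assume "c \<in> \<Union>Z1" then have "f1 c = 0" using F1(2) f1(1) by blast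
      then show False using c(2) by simp
    next
      assume "c \<in> \<Union>Z2" then have "f2 c = 0" using F2(2) f2(1) by blast
      then show False using c(3) by simp
    qed
  qed
qed

lemma flag_closed_UN:
  assumes "finite F" "\<And>t. t \<in> F \<Longrightarrow> flag_closed n (X t)"
  shows "flag_closed n (\<Union> (X ` F))"
  using assms
proof (induction F rule: finite_induct)
  case empty then show ?case using flag_closed_empty by simp
next
  case (insert t G) then show ?case using flag_closed_Un[of n "X t" "\<Union> (X ` G)"] by simp
qed

lemma irr_in_union:
  assumes fin: "finite S'" and cl: "\<And>s. s \<in> S' \<Longrightarrow> flag_closed n (X s)"
    and Y: "flag_irreducible n Y" and sub: "Y \<subseteq> \<Union> (X ` S')"
  shows "\<exists>s\<in>S'. Y \<subseteq> X s"
  using fin cl sub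
proof (induction S' rule: finite_induct)
  case empty
  then show ?case using Y unfolding flag_irreducible_def by auto
next
  case (insert s F)
  have c1: "flag_closed n (X s)" using insert by simp
  have c2: "flag_closed n (\<Union> (X ` F))"
    by (rule flag_closed_UN[OF insert(1)], insert insert, simp)
  have "Y \<subseteq> X s \<union> \<Union> (X ` F)" using insert by simp
  then have "Y \<subseteq> X s \<or> Y \<subseteq> \<Union> (X ` F)"
    using Y c1 c2 unfolding flag_irreducible_def by blast
  then show ?case
  proof
    assume "Y \<subseteq> X s" then show ?thesis by simp
  next
    assume "Y \<subseteq> \<Union> (X ` F)"
    then have "\<exists>s\<in>F. Y \<subseteq> X s" using insert by simp
    then show ?thesis by auto
  qed
qed

lemma unit_span_mono: "P \<subseteq> Q \<Longrightarrow> unit_span n P \<subseteq> unit_span n Q"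
  unfolding unit_span_def by blast

lemma Hsum_cond:
  fixes g ginv :: "complex mat"
  assumes n: "1 \<le> n" and g: "g \<in> carrier_mat n n" and gi: "ginv \<in> carrier_mat n n"
    and e: "g * ginv = 1\<^sub>m n"
  shows "ginv * Eunit n 1 n * g \<in> Hsum n S \<longleftrightarrow> (\<exists>(i, j)\<in>S. ginv * Eunit n 1 n * g \<in> Hij n i j)"
proof
  assume h: "\<exists>(i, j)\<in>S. ginv * Eunit n 1 n * g \<in> Hij n i j"
  then obtain i j where ij: "(i, j) \<in> S" "ginv * Eunit n 1 n * g \<in> Hij n i j" by blast
  have "Hij_pattern n i j \<subseteq> (\<Union>(i, j)\<in>S. Hij_pattern n i j)" using ij(1) by blast
  then show "ginv * Eunit n 1 n * g \<in> Hsum n S"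
    using ij(2) unit_span_mono unfolding Hsum_def Hij_def by blast
next
  assume h: "ginv * Eunit n 1 n * g \<in> Hsum n S"
  define A where "A = {a. a < n \<and> ginv $$ (a, 0) \<noteq> 0}"
  define B where "B = {b. b < n \<and> g $$ (n - 1, b) \<noteq> 0}"
  have Af: "finite A" "A \<noteq> {}" unfolding A_def using col_first_nz[OF g gi e n] by auto
  have Bf: "finite B" "B \<noteq> {}" unfolding B_def using row_last_nz[OF g gi e n] by auto
  define a' where "a' = Max A"
  define b' where "b' = Min B"
  have a'A: "a' \<in> A" unfolding a'_def using Max_in[OF Af] .
  have b'B: "b' \<in> B" unfolding b'_def using Min_in[OF Bf] .
  have aM: "a \<in> A \<Longrightarrow> a \<le> a'" for a unfolding a'_def using Max_ge[OF Af(1)] by blast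
  have bM: "b \<in> B \<Longrightarrow> b' \<le> b" for b unfolding b'_def using Min_le[OF Bf(1)] by blast
  have an: "a' < n" "ginv $$ (a', 0) \<noteq> 0" using a'A unfolding A_def by auto
  have bn: "b' < n" "g $$ (n - 1, b') \<noteq> 0" using b'B unfolding B_def by auto
  have "(ginv * Eunit n 1 n * g) $$ (a', b') \<noteq> 0" using E_entry[OF g gi an(1) bn(1)] an bn by simp
  then have "(a' + 1, b' + 1) \<in> (\<Union>(i, j)\<in>S. Hij_pattern n i j)"
    using h an(1) bn(1) unfolding Hsum_def unit_span_def by blast
  then obtain i j where ij: "(i, j) \<in> S" "a' + 1 \<le> i" "j \<le> b' + 1" unfolding Hij_pattern_def by blast
  have "condij n i j g ginv" unfolding condij_def
  proof (intro conjI allI impI)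
    fix a assume a: "i \<le> a \<and> a < n"
    show "ginv $$ (a, 0) = 0"
    proof (rule ccontr)
      assume "ginv $$ (a, 0) \<noteq> 0" then have "a \<in> A" using a unfolding A_def by simp
      then show False using aM a ij(2) by force
    qed
  next
    fix b assume b: "b + 1 < j \<and> b < n"
    show "g $$ (n - 1, b) = 0"
    proof (rule ccontr)
      assume "g $$ (n - 1, b) \<noteq> 0" then have "b \<in> B" using b unfolding B_def by simp
      then show False using bM b ij(3) by force
    qed
  qed
  then have "ginv * Eunit n 1 n * g \<in> Hij n i j" using Hij_cond[OF n g gi e] by simp
  then show "\<exists>(i, j)\<in>S. ginv * Eunit n 1 n * g \<in> Hij n i j" using ij(1) by blast
qed

lemma XK_Hsum:
  assumes n: "1 \<le> n"
  shows "XK n (Hsum n S) = \<Union> ((\<lambda>(i, j). XK n (Hij n i j)) ` S)"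
proof (rule Set.set_eqI, rule iffI)
  fix x assume "x \<in> XK n (Hsum n S)"
  then obtain g ginv where g: "x = flag n g" "g \<in> GL n" "ginv \<in> carrier_mat n n" "ginv * g = 1\<^sub>m n"
    "g * ginv = 1\<^sub>m n" "ginv * Eunit n 1 n * g \<in> Hsum n S" unfolding XK_def by blast
  then obtain i j where ij: "(i, j) \<in> S" "ginv * Eunit n 1 n * g \<in> Hij n i j"
    using Hsum_cond[OF n GL_carrier[OF g(2)] g(3) g(5)] by blast
  have "x \<in> XK n (Hij n i j)" unfolding XK_def using g ij(2) by blast
  then show "x \<in> \<Union> ((\<lambda>(i, j). XK n (Hij n i j)) ` S)" using ij(1) by blast
next
  fix x assume "x \<in> \<Union> ((\<lambda>(i, j). XK n (Hij n i j)) ` S)"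
  then obtain i j where ij: "(i, j) \<in> S" "x \<in> XK n (Hij n i j)" by blast
  then obtain g ginv where g: "x = flag n g" "g \<in> GL n" "ginv \<in> carrier_mat n n" "ginv * g = 1\<^sub>m n"
    "g * ginv = 1\<^sub>m n" "ginv * Eunit n 1 n * g \<in> Hij n i j" unfolding XK_def by blast
  have "ginv * Eunit n 1 n * g \<in> Hsum n S"
    using Hsum_cond[OF n GL_carrier[OF g(2)] g(3) g(5)] ij(1) g(6) by blast
  then show "x \<in> XK n (Hsum n S)" unfolding XK_def using g by blast
qed

lemma perm_mats:
  assumes pr: "\<And>k. \<pi> (\<rho> k) = k" and rp: "\<And>k. \<rho> (\<pi> k) = k"
    and pn: "\<And>k. k < n \<Longrightarrow> \<pi> k < n" and rn: "\<And>k. k < n \<Longrightarrow> \<rho> k < n"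
  shows "mat n n (\<lambda>(r, c). if c = \<pi> r then 1 else 0) * mat n n (\<lambda>(r, c). if r = \<pi> c then 1 else 0) = (1\<^sub>m n :: complex mat)"
    "mat n n (\<lambda>(r, c). if r = \<pi> c then 1 else 0) * mat n n (\<lambda>(r, c). if c = \<pi> r then 1 else 0) = (1\<^sub>m n :: complex mat)"
proof -
  let ?g = "mat n n (\<lambda>(r, c). if r = \<pi> c then 1 else 0) :: complex mat"
  let ?gi = "mat n n (\<lambda>(r, c). if c = \<pi> r then 1 else 0) :: complex mat"
  have gc: "?g \<in> carrier_mat n n" and gic: "?gi \<in> carrier_mat n n" by auto
  show "?gi * ?g = 1\<^sub>m n"
  proof (rule eq_matI)
    fix r c assume rc: "r < dim_row (1\<^sub>m n :: complex mat)" "c < dim_col (1\<^sub>m n :: complex mat)"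
    then have rc': "r < n" "c < n" by auto
    have "(?gi * ?g) $$ (r, c) = (\<Sum>k<n. ?gi $$ (r, k) * ?g $$ (k, c))" by (rule mult_entry[OF gic gc rc'])
    also have "\<dots> = ?gi $$ (r, \<pi> r) * ?g $$ (\<pi> r, c)"
      by (rule sum_single, insert rc' pn, auto)
    also have "\<dots> = (if r = c then 1 else 0)"
    proof -
      have inj: "\<pi> r = \<pi> c \<Longrightarrow> r = c" using rp by metis
      show ?thesis using rc' pn inj by auto
    qed
    finally show "(?gi * ?g) $$ (r, c) = 1\<^sub>m n $$ (r, c)" using rc' by simp
  qed auto
  show "?g * ?gi = 1\<^sub>m n"
  proof (rule eq_matI)
    fix r c assume rc: "r < dim_row (1\<^sub>m n :: complex mat)" "c < dim_col (1\<^sub>m n :: complex mat)"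
    then have rc': "r < n" "c < n" by auto
    have "(?g * ?gi) $$ (r, c) = (\<Sum>k<n. ?g $$ (r, k) * ?gi $$ (k, c))" by (rule mult_entry[OF gc gic rc'])
    also have "\<dots> = ?g $$ (r, \<rho> r) * ?gi $$ (\<rho> r, c)"
    proof (rule sum_single)
      fix k assume k: "k \<in> {..<n}" "k \<noteq> \<rho> r"
      have "r \<noteq> \<pi> k" using k(2) rp by metis
      then show "?g $$ (r, k) * ?gi $$ (k, c) = 0" using rc' k(1) by simp
    qed (insert rc' rn, auto)
    also have "\<dots> = (if r = c then 1 else 0)" using rc' rn pr by auto
    finally show "(?g * ?gi) $$ (r, c) = 1\<^sub>m n $$ (r, c)" using rc' by simp
  qed auto
qed

lemma perm_witness:
  assumes n: "2 \<le> n" and i: "1 \<le> i" "i \<le> n" and j: "1 \<le> j" "j \<le> n" and ij: "i \<noteq> j"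
  shows "\<exists>(g::complex mat) (gi::complex mat). g \<in> carrier_mat n n \<and> gi \<in> carrier_mat n n \<and> gi * g = 1\<^sub>m n \<and> g * gi = 1\<^sub>m n \<and>
     gi $$ (i - 1, 0) = 1 \<and> g $$ (n - 1, j - 1) = 1 \<and>
     (\<forall>a<n. a \<noteq> i - 1 \<longrightarrow> gi $$ (a, 0) = 0) \<and> (\<forall>b<n. b \<noteq> j - 1 \<longrightarrow> g $$ (n - 1, b) = 0)"
proof -
  define t1 where "t1 = Transposition.transpose (0::nat) (i - 1)"
  define x where "x = t1 (j - 1)"
  define t2 where "t2 = Transposition.transpose x (n - 1)"
  define \<pi> where "\<pi> = t2 \<circ> t1"
  define \<rho> where "\<rho> = t1 \<circ> t2"
  have tt: "Transposition.transpose a b (Transposition.transpose a b k) = k" for a b k :: nat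
    unfolding Transposition.transpose_def by auto
  have tn: "a < n \<Longrightarrow> b < n \<Longrightarrow> k < n \<Longrightarrow> Transposition.transpose a b k < n" for a b k :: nat
    unfolding Transposition.transpose_def by auto
  have xn: "x < n" unfolding x_def t1_def using tn i j by simp
  have x0: "x \<noteq> 0" unfolding x_def t1_def Transposition.transpose_def using ij i j by auto
  have pr: "\<pi> (\<rho> k) = k" and rp: "\<rho> (\<pi> k) = k" for k unfolding \<pi>_def \<rho>_def t1_def t2_def using tt by auto
  have pn: "k < n \<Longrightarrow> \<pi> k < n" and rn: "k < n \<Longrightarrow> \<rho> k < n" for k
    unfolding \<pi>_def \<rho>_def t1_def t2_def using tn xn i n by auto
  have pi1: "\<pi> (i - 1) = 0" unfolding \<pi>_def t2_def t1_def Transposition.transpose_def using x0 n by auto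
  have pj1: "\<pi> (j - 1) = n - 1" unfolding \<pi>_def t2_def x_def Transposition.transpose_def by auto
  define g where "g = (mat n n (\<lambda>(r, c). if r = \<pi> c then 1 else 0) :: complex mat)"
  define gi where "gi = (mat n n (\<lambda>(r, c). if c = \<pi> r then 1 else 0) :: complex mat)"
  have e: "gi * g = 1\<^sub>m n" "g * gi = 1\<^sub>m n" unfolding g_def gi_def using perm_mats[of \<pi> \<rho> n] pr rp pn rn by auto
  have inj: "\<pi> a = \<pi> b \<Longrightarrow> a = b" for a b using rp by metis
  have gc: "g \<in> carrier_mat n n" "gi \<in> carrier_mat n n" unfolding g_def gi_def by auto
  have i1: "i - 1 < n" and j1: "j - 1 < n" and n1: "n - 1 < n" using i j n by auto
  have v1: "gi $$ (i - 1, 0) = 1" unfolding gi_def using i1 n pi1 by simp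
  have v2: "g $$ (n - 1, j - 1) = 1" unfolding g_def using j1 n1 pj1 by simp
  have v3: "\<forall>a<n. a \<noteq> i - 1 \<longrightarrow> gi $$ (a, 0) = 0"
  proof (intro allI impI)
    fix a assume a: "a < n" "a \<noteq> i - 1"
    have "0 \<noteq> \<pi> a" using inj[of a "i - 1"] pi1 a(2) by auto
    then show "gi $$ (a, 0) = 0" unfolding gi_def using a(1) n by simp
  qed
  have v4: "\<forall>b<n. b \<noteq> j - 1 \<longrightarrow> g $$ (n - 1, b) = 0"
  proof (intro allI impI)
    fix b assume b: "b < n" "b \<noteq> j - 1"
    have "n - 1 \<noteq> \<pi> b" using inj[of b "j - 1"] pj1 b(2) by auto
    then show "g $$ (n - 1, b) = 0" unfolding g_def using b(1) n1 by simp
  qed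
  show ?thesis using gc e v1 v2 v3 v4 by blast
qed

lemma noncontain:
  assumes n: "2 \<le> n" and i: "1 \<le> i" "i \<le> n" and j: "1 \<le> j" "j \<le> n" and ij: "i \<noteq> j"
    and c: "i' < i \<or> j < j'"
  shows "\<not> XK n (Hij n i j) \<subseteq> XK n (Hij n i' j')"
proof
  assume sub: "XK n (Hij n i j) \<subseteq> XK n (Hij n i' j')"
  obtain g gi :: "complex mat" where g: "g \<in> carrier_mat n n" "gi \<in> carrier_mat n n" "gi * g = 1\<^sub>m n" "g * gi = 1\<^sub>m n"
     "gi $$ (i - 1, 0) = 1" "g $$ (n - 1, j - 1) = 1"
     "\<forall>a<n. a \<noteq> i - 1 \<longrightarrow> gi $$ (a, 0) = 0" "\<forall>b<n. b \<noteq> j - 1 \<longrightarrow> g $$ (n - 1, b) = 0"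
    using perm_witness[OF n i j ij] by blast
  have n1: "1 \<le> n" using n by simp
  have "condij n i j g gi" unfolding condij_def using g(7,8) i j by auto
  then have gP: "g \<in> PPc n i j" using PPc_I[OF g(1-4)] by simp
  have "flag n g \<in> XK n (Hij n i j)" using gP XK_Hij[OF n1] by simp
  then have "flag n g \<in> XK n (Hij n i' j')" using sub by blast
  then have "g \<in> PPc n i' j'" using flag_XK[OF n1 PPc_GL[OF gP]] by simp
  then have cd: "condij n i' j' g gi" using PPc_cond[OF _ g(2,3)] by simp
  from c show False
  proof
    assume "i' < i" then have "i' \<le> i - 1 \<and> i - 1 < n" using i by auto
    then have "gi $$ (i - 1, 0) = 0" using cd unfolding condij_def by blast
    then show False using g(5) by simp
  next
    assume "j < j'" then have "j - 1 + 1 < j' \<and> j - 1 < n" using j by auto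
    then have "g $$ (n - 1, j - 1) = 0" using cd unfolding condij_def by blast
    then show False using g(6) by simp
  qed
qed

lemma unit_span_Eunit:
  assumes a: "1 \<le> a" "a \<le> n" and b: "1 \<le> b" "b \<le> n"
  shows "Eunit n a b \<in> unit_span n P \<longleftrightarrow> (a, b) \<in> P"
proof
  assume h: "Eunit n a b \<in> unit_span n P"
  show "(a, b) \<in> P"
  proof (rule ccontr)
    assume nP: "(a, b) \<notin> P"
    have "a - 1 < n" "b - 1 < n" "(a - 1 + 1, b - 1 + 1) \<notin> P" using a b nP by auto
    then have "Eunit n a b $$ (a - 1, b - 1) = 0" using h unfolding unit_span_def by blast
    then show False using a b by (simp add: Eunit_entry)
  qed
next
  assume P: "(a, b) \<in> P"
  show "Eunit n a b \<in> unit_span n P" unfolding unit_span_def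
  proof (intro CollectI conjI allI impI)
    show "Eunit n a b \<in> carrier_mat n n" unfolding Eunit_def by simp
  next
    fix x y assume xy: "x < n" "y < n" "(x + 1, y + 1) \<notin> P"
    then have "\<not> (x = a - 1 \<and> y = b - 1)" using P a b by auto
    then show "Eunit n a b $$ (x, y) = 0" using xy by (simp add: Eunit_entry)
  qed
qed

lemma pat_eq:
  assumes e: "unit_span n P = unit_span n Q" and a: "1 \<le> a" "a \<le> n" and b: "1 \<le> b" "b \<le> n"
  shows "(a, b) \<in> P \<longleftrightarrow> (a, b) \<in> Q"
  using unit_span_Eunit[OF a b, of P] unit_span_Eunit[OF a b, of Q] e by simp

lemma Hij_mono: "i \<le> i' \<Longrightarrow> j' \<le> j \<Longrightarrow> Hij n i j \<subseteq> Hij n i' j'"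
  unfolding Hij_def by (rule unit_span_mono) (auto simp: Hij_pattern_def)

lemma no_diag:
  assumes n: "2 \<le> n" and mc: "minimal_in_class n H" and md: "maximal_decomposition n H S"
    and kS: "(k, k) \<in> S"
  shows False
proof -
  obtain h where hm: "mono_on {1..n} h" and hb: "\<forall>l\<in>{1..n}. h l \<le> n" and H: "H = hess_space n h"
    using mc unfolding minimal_in_class_def is_hessenberg_def by blast
  have Sb: "S \<subseteq> {1..n} \<times> {1..n}" and HS: "H = Hsum n S"
    and nc: "\<forall>p\<in>S. \<forall>q\<in>S. p \<noteq> q \<longrightarrow> \<not> Hij n (fst p) (snd p) \<subseteq> Hij n (fst q) (snd q)"
    using md unfolding maximal_decomposition_def by auto
  have k: "1 \<le> k" "k \<le> n" using kS Sb by auto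
  define HP where "HP = {(k, l). k \<in> {1..n} \<and> l \<in> {1..n} \<and> k \<le> h l}"
  define UP where "UP = (\<Union>(i, j)\<in>S. Hij_pattern n i j)"
  have eqs: "unit_span n HP = unit_span n UP" using H HS unfolding hess_space_def Hsum_def HP_def UP_def by simp
  have key: "a \<le> h b \<longleftrightarrow> (\<exists>(i, j)\<in>S. a \<le> i \<and> j \<le> b)" if ab: "1 \<le> a" "a \<le> n" "1 \<le> b" "b \<le> n" for a b
  proof -
    have "a \<le> h b \<longleftrightarrow> (a, b) \<in> HP" unfolding HP_def using ab by auto
    also have "\<dots> \<longleftrightarrow> (a, b) \<in> UP" using pat_eq[OF eqs ab] .
    also have "\<dots> \<longleftrightarrow> (\<exists>(i, j)\<in>S. a \<le> i \<and> j \<le> b)" unfolding UP_def Hij_pattern_def using ab by auto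
    finally show ?thesis .
  qed
  have bad: "\<And>i' j'. (i', j') \<in> S \<Longrightarrow> k \<le> i' \<Longrightarrow> j' \<le> k \<Longrightarrow> (i', j') = (k, k)"
  proof (rule ccontr)
    fix i' j' assume h1: "(i', j') \<in> S" "k \<le> i'" "j' \<le> k" "(i', j') \<noteq> (k, k)"
    have "Hij n k k \<subseteq> Hij n i' j'" using Hij_mono h1 by blast
    then show False using nc kS h1 by fastforce
  qed
  have hk: "h k = k"
  proof (rule ccontr)
    assume "h k \<noteq> k"
    moreover have "k \<le> h k" using key[OF k k] kS by blast
    ultimately have k1: "k + 1 \<le> h k" by simp
    then have "k + 1 \<le> n" using hb k by force
    then obtain i' j' where "(i', j') \<in> S" "k + 1 \<le> i'" "j' \<le> k" using key[of "k + 1" k] k1 k by auto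
    then show False using bad by fastforce
  qed
  have hk1: "k = 1 \<or> h (k - 1) < k"
  proof (rule ccontr)
    assume "\<not> (k = 1 \<or> h (k - 1) < k)"
    then have k2: "2 \<le> k" "k \<le> h (k - 1)" using k by auto
    have "1 \<le> k - 1" "k - 1 \<le> n" using k2 k by auto
    then have "\<exists>(i, j)\<in>S. k \<le> i \<and> j \<le> k - 1" using key[of k "k - 1"] k k2 by blast
    then obtain i' j' where "(i', j') \<in> S" "k \<le> i'" "j' \<le> k - 1" by blast
    then show False using bad k2 by fastforce
  qed
  define h' where "h' = h(k := k - 1)"
  define K' where "K' = hess_space n h'"
  have hm': "mono_on {1..n} h'"
  proof (rule mono_onI)
    fix x y assume xy: "x \<in> {1..n}" "y \<in> {1..n}" "x \<le> y"
    show "h' x \<le> h' y"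
    proof (cases "x = k")
      case True
      show ?thesis
      proof (cases "y = k")
        case True then show ?thesis using \<open>x = k\<close> by simp
      next
        case False
        have "h k \<le> h y" using mono_onD[OF hm] xy True k by auto
        then show ?thesis using True False hk unfolding h'_def by simp
      qed
    next
      case xk: False
      show ?thesis
      proof (cases "y = k")
        case True
        then have "x \<le> k - 1" "2 \<le> k" using xy xk by auto
        then have "h x \<le> h (k - 1)" using mono_onD[OF hm] xy k by auto
        then show ?thesis using hk1 True xk \<open>2 \<le> k\<close> unfolding h'_def by auto
      next
        case False
        then show ?thesis using xk mono_onD[OF hm] xy unfolding h'_def by auto
      qed
    qed
  qed
  have hb': "\<forall>l\<in>{1..n}. h' l \<le> n" using hb unfolding h'_def by auto
  have hessK: "is_hessenberg n K'" unfolding is_hessenberg_def K'_def using hm' hb' by blast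
  define HP' where "HP' = {(k, l). k \<in> {1..n} \<and> l \<in> {1..n} \<and> k \<le> h' l}"
  have HPsub: "HP' \<subseteq> HP" unfolding HP'_def HP_def h'_def using hk by auto
  have KH: "K' \<subseteq> H" unfolding K'_def H hess_space_def HP'_def[symmetric] HP_def[symmetric]
    by (rule unit_span_mono[OF HPsub])
  have "Eunit n k k \<in> H" unfolding H hess_space_def HP_def[symmetric]
    using unit_span_Eunit[OF k k] k hk unfolding HP_def by simp
  moreover have "Eunit n k k \<notin> K'" unfolding K'_def hess_space_def HP'_def[symmetric]
    using unit_span_Eunit[OF k k] k unfolding HP'_def h'_def by simp
  ultimately have KH': "K' \<subset> H" using KH by blast
  have pw: "ginv * Eunit n 1 n * g \<in> K' \<longleftrightarrow> ginv * Eunit n 1 n * g \<in> H"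
    if g: "g \<in> carrier_mat n n" and gi: "ginv \<in> carrier_mat n n" and e: "g * ginv = 1\<^sub>m n" for g ginv
  proof
    assume "ginv * Eunit n 1 n * g \<in> K'" then show "ginv * Eunit n 1 n * g \<in> H" using KH by blast
  next
    assume MH: "ginv * Eunit n 1 n * g \<in> H"
    define u where "u = (\<lambda>a. ginv $$ (a, 0))"
    define v where "v = (\<lambda>b. g $$ (n - 1, b))"
    have Me: "a < n \<Longrightarrow> b < n \<Longrightarrow> (ginv * Eunit n 1 n * g) $$ (a, b) = u a * v b" for a b
      using E_entry[OF g gi] unfolding u_def v_def by simp
    have Mz: "a < n \<Longrightarrow> b < n \<Longrightarrow> (a + 1, b + 1) \<notin> HP \<Longrightarrow> u a * v b = 0" for a b
      using MH Me unfolding H hess_space_def HP_def[symmetric] unit_span_def by auto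
    have diag: "u (k - 1) * v (k - 1) = 0"
    proof (rule ccontr)
      assume nz: "u (k - 1) * v (k - 1) \<noteq> 0"
      have k1n: "k - 1 < n" using k by simp
      have ua: "a \<le> k - 1" if a: "a < n" "u a \<noteq> 0" for a
      proof (rule ccontr)
        assume "\<not> a \<le> k - 1"
        then have "(a + 1, k - 1 + 1) \<notin> HP" using hk k unfolding HP_def by auto
        then have "u a * v (k - 1) = 0" by (rule Mz[OF a(1) k1n])
        then show False using a nz by simp
      qed
      have vb: "k - 1 \<le> b" if b: "b < n" "v b \<noteq> 0" for b
      proof (rule ccontr)
        assume bk: "\<not> k - 1 \<le> b"
        then have k2: "2 \<le> k" "b + 1 \<le> k - 1" by auto
        then have "h (b + 1) \<le> h (k - 1)" using mono_onD[OF hm] k by auto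
        then have "h (b + 1) < k" using hk1 k2 by auto
        then have "(k - 1 + 1, b + 1) \<notin> HP" using k unfolding HP_def by auto
        then have "u (k - 1) * v b = 0" by (rule Mz[OF k1n b(1)])
        then show False using b nz by simp
      qed
      have "(g * ginv) $$ (n - 1, 0) = (\<Sum>c<n. g $$ (n - 1, c) * ginv $$ (c, 0))"
        using mult_entry[OF g gi] n by simp
      also have "\<dots> = g $$ (n - 1, k - 1) * ginv $$ (k - 1, 0)"
      proof (rule sum_single)
        fix c assume c: "c \<in> {..<n}" "c \<noteq> k - 1"
        show "g $$ (n - 1, c) * ginv $$ (c, 0) = 0"
        proof (rule ccontr)
          assume "g $$ (n - 1, c) * ginv $$ (c, 0) \<noteq> 0"
          then have "u c \<noteq> 0" "v c \<noteq> 0" unfolding u_def v_def by auto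
          then have "c \<le> k - 1" "k - 1 \<le> c" using ua vb c by auto
          then show False using c by simp
        qed
      qed (insert k1n, auto)
      finally have "(g * ginv) $$ (n - 1, 0) = v (k - 1) * u (k - 1)" unfolding u_def v_def .
      moreover have "(g * ginv) $$ (n - 1, 0) = 0" using e n by simp
      ultimately show False using nz by simp
    qed
    show "ginv * Eunit n 1 n * g \<in> K'" unfolding K'_def hess_space_def HP'_def[symmetric] unit_span_def
    proof (intro CollectI conjI allI impI)
      show "ginv * Eunit n 1 n * g \<in> carrier_mat n n" using g gi unfolding Eunit_def by auto
    next
      fix x y assume xy: "x < n" "y < n" "(x + 1, y + 1) \<notin> HP'"
      show "(ginv * Eunit n 1 n * g) $$ (x, y) = 0"
      proof (cases "(x + 1, y + 1) \<in> HP")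
        case True
        then have "y + 1 = k" "x + 1 = k" using xy(3) hk unfolding HP_def HP'_def h'_def
          by (auto split: if_splits)
        then have "x = k - 1" "y = k - 1" by auto
        then show ?thesis using Me xy diag by simp
      next
        case False then show ?thesis using Me Mz xy by simp
      qed
    qed
  qed
  have "XK n K' = XK n H"
  proof (rule Set.set_eqI, rule iffI)
    fix x assume "x \<in> XK n K'"
    then obtain g ginv where g: "x = flag n g" "g \<in> GL n" "ginv \<in> carrier_mat n n" "ginv * g = 1\<^sub>m n"
      "g * ginv = 1\<^sub>m n" "ginv * Eunit n 1 n * g \<in> K'" unfolding XK_def by blast
    then have "ginv * Eunit n 1 n * g \<in> H" using pw[OF GL_carrier[OF g(2)] g(3) g(5)] by simp
    then show "x \<in> XK n H" unfolding XK_def using g by blast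
  next
    fix x assume "x \<in> XK n H"
    then obtain g ginv where g: "x = flag n g" "g \<in> GL n" "ginv \<in> carrier_mat n n" "ginv * g = 1\<^sub>m n"
      "g * ginv = 1\<^sub>m n" "ginv * Eunit n 1 n * g \<in> H" unfolding XK_def by blast
    then have "ginv * Eunit n 1 n * g \<in> K'" using pw[OF GL_carrier[OF g(2)] g(3) g(5)] by simp
    then show "x \<in> XK n K'" unfolding XK_def using g by blast
  qed
  then have "E1n_equivalent n K' H" unfolding E1n_equivalent_def .
  moreover have "\<not> E1n_equivalent n K' H" using mc hessK KH' unfolding minimal_in_class_def by blast
  ultimately show False by simp
qed

theorem mainTheorem8:
  fixes n :: nat and H :: "complex mat set" and S :: "(nat \<times> nat) set"
  assumes "1 \<le> n"
    and "minimal_in_class n H"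
    and "maximal_decomposition n H S"
  shows "{Y. irreducible_component n (XK n H) Y} = (\<lambda>(i, j). XK n (Hij n i j)) ` S"
proof -
  note n = assms(1) and mc = assms(2) and md = assms(3)
  define Xs where "Xs = (\<lambda>(i, j). XK n (Hij n i j))"
  have Sb: "S \<subseteq> {1..n} \<times> {1..n}" and HS: "H = Hsum n S"
    and nc: "\<forall>p\<in>S. \<forall>q\<in>S. p \<noteq> q \<longrightarrow> \<not> Hij n (fst p) (snd p) \<subseteq> Hij n (fst q) (snd q)"
    using md unfolding maximal_decomposition_def by auto
  have fin: "finite S" using Sb finite_subset by blast
  have U: "XK n H = \<Union> (Xs ` S)" unfolding Xs_def HS using XK_Hsum[OF n] .
  have cl: "flag_closed n (Xs s)" if s: "s \<in> S" for s
    using flag_closed_XK[OF n] unfolding Xs_def by (cases s) simp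
  have ir: "flag_irreducible n (Xs s)" if s: "s \<in> S" for s
  proof -
    obtain i j where ij: "s = (i, j)" by (cases s)
    have b: "1 \<le> i" "i \<le> n" "1 \<le> j" "j \<le> n" using s ij Sb by auto
    have ne: "PPc n i j \<noteq> {}" using one_PPc[OF n b(1) b(4)] by blast
    show ?thesis
    proof (cases "n = 1")
      case True
      then have "i = 1" "j = 1" using b by auto
      then show ?thesis using irr_XK[OF n _ ne] IR_one True ij unfolding Xs_def by simp
    next
      case False
      then have n2: "2 \<le> n" using n by simp
      have "i \<noteq> j" using no_diag[OF n2 mc md] s ij by blast
      then show ?thesis using irr_XK[OF n IR_PPc[OF n2 b \<open>i \<noteq> j\<close>] ne] ij unfolding Xs_def by simp
    qed
  qed
  have inj: "s = t" if s: "s \<in> S" and t: "t \<in> S" and st: "Xs s \<subseteq> Xs t" for s t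
  proof (rule ccontr)
    assume neq: "s \<noteq> t"
    obtain i j where ij: "s = (i, j)" by (cases s)
    obtain i' j' where ij': "t = (i', j')" by (cases t)
    have b: "1 \<le> i" "i \<le> n" "1 \<le> j" "j \<le> n" using s ij Sb by auto
    have b': "1 \<le> i'" "i' \<le> n" "1 \<le> j'" "j' \<le> n" using t ij' Sb by auto
    show False
    proof (cases "n = 1")
      case True
      then show False using b b' ij ij' neq by auto
    next
      case False
      then have n2: "2 \<le> n" using n by simp
      have "i \<noteq> j" using no_diag[OF n2 mc md] s ij by blast
      have "\<not> Hij n (fst s) (snd s) \<subseteq> Hij n (fst t) (snd t)" using nc s t neq by blast
      then have "\<not> Hij n i j \<subseteq> Hij n i' j'" using ij ij' by simp
      then have "i' < i \<or> j < j'" using Hij_mono[of i i' j' j n] by linarith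
      then have "\<not> XK n (Hij n i j) \<subseteq> XK n (Hij n i' j')" using noncontain[OF n2 b \<open>i \<noteq> j\<close>] by blast
      then show False using st ij ij' unfolding Xs_def by simp
    qed
  qed
  have sub: "Xs s \<subseteq> XK n H" if "s \<in> S" for s using U that by blast
  have cover: "\<exists>s\<in>S. Y \<subseteq> Xs s" if Y: "flag_irreducible n Y" "Y \<subseteq> XK n H" for Y
    by (rule irr_in_union[OF fin cl Y(1)], insert Y(2) U, auto)
  have "{Y. irreducible_component n (XK n H) Y} = Xs ` S"
  proof (rule Set.set_eqI, rule iffI)
    fix Y assume "Y \<in> {Y. irreducible_component n (XK n H) Y}"
    then have Y: "Y \<subseteq> XK n H" "flag_irreducible n Y"
      "\<And>Y'. Y \<subseteq> Y' \<Longrightarrow> Y' \<subseteq> XK n H \<Longrightarrow> flag_irreducible n Y' \<Longrightarrow> Y' = Y"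
      unfolding irreducible_component_def by auto
    obtain s where s: "s \<in> S" "Y \<subseteq> Xs s" using cover[OF Y(2) Y(1)] by blast
    have "Xs s = Y" using Y(3)[OF s(2) sub[OF s(1)] ir[OF s(1)]] .
    then show "Y \<in> Xs ` S" using s(1) by blast
  next
    fix Y assume "Y \<in> Xs ` S"
    then obtain s where s: "s \<in> S" "Y = Xs s" by blast
    have "irreducible_component n (XK n H) Y" unfolding irreducible_component_def
    proof (intro conjI allI impI)
      show "Y \<subseteq> XK n H" using sub s by simp
      show "flag_irreducible n Y" using ir s by simp
    next
      fix Y' assume Y': "Y \<subseteq> Y' \<and> Y' \<subseteq> XK n H \<and> flag_irreducible n Y'"
      obtain t where t: "t \<in> S" "Y' \<subseteq> Xs t" using cover Y' by blast
      have "Xs s \<subseteq> Xs t" using Y' t s by blast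
      then have "s = t" using inj s(1) t(1) by blast
      then show "Y' = Y" using Y' t s by blast
    qed
    then show "Y \<in> {Y. irreducible_component n (XK n H) Y}" by simp
  qed
  then show ?thesis unfolding Xs_def .
qed


end
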